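(* Let $d\ge 2$, $\omega=e^{2\pi i/d}$, $Z=\sum_{k=0}^{d-1}\omega^k|k\rangle\langle k|$, and for $r\in[0,1]$ let $\mathcal{G}_r(\rho)=r\rho+(1-r)Z\rho Z^\dagger$ be the dephasing channel on $\mathbb{C}^d$. For any $r_1,r_2\in[0,1]$, a single-system probe is sufficient for optimally distinguishing $\mathcal{G}_{r_1}$ and $\mathcal{G}_{r_2}$: the maximum of the success probability over single-system probes equals its maximum over all probes, including entangled probes with an arbitrary ancilla.
   Context: Two channels $\mathcal{N}_1,\mathcal{N}_2$ on $\mathbb{C}^d$, chosen with equal priors $1/2$, are discriminated in a single shot. A single-system probe is a state $\rho$ on $\mathbb{C}^d$ with success probability $\frac12+\frac14\|\mathcal{N}_1(\rho)-\mathcal{N}_2(\rho)\|_1$; a general (possibly entangled) probe is a state $\rho_{AB}$ on $\mathbb{C}^d\otimes\mathbb{C}^{d'}$ (any finite $d'$) with the channel acting on $A$, with success probability $\frac12+\frac14\|(\mathcal{N}_1\otimes\mathrm{id})(\rho_{AB})-(\mathcal{N}_2\otimes\mathrm{id})(\rho_{AB})\|_1$; $\|\cdot\|_1$ is the trace norm. *)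

theory Defs
  imports Complex_Main "Jordan_Normal_Form.Matrix"
begin

definition mtrace :: "complex mat \<Rightarrow> complex" where
  "mtrace A = (\<Sum>i<dim_row A. A $$ (i,i))"

definition adj :: "complex mat \<Rightarrow> complex mat" where
  "adj A = mat (dim_col A) (dim_row A) (\<lambda>(i,j). cnj (A $$ (j,i)))"

definition psd :: "nat \<Rightarrow> complex mat \<Rightarrow> bool" where
  "psd n A \<longleftrightarrow> A \<in> carrier_mat n n \<and>
     (\<forall>v \<in> carrier_vec n. let q = (\<Sum>i<n. cnj (v $ i) * (A *\<^sub>v v) $ i)
                            in Im q = 0 \<and> Re q \<ge> 0)"

definition density :: "nat \<Rightarrow> complex mat \<Rightarrow> bool" where
  "density n \<rho> \<longleftrightarrow> psd n \<rho> \<and> mtrace \<rho> = 1"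

definition mat_sqrt :: "nat \<Rightarrow> complex mat \<Rightarrow> complex mat" where
  "mat_sqrt n P = (THE B. psd n B \<and> B * B = P)"

definition trace_norm :: "complex mat \<Rightarrow> real" where
  "trace_norm A = Re (mtrace (mat_sqrt (dim_col A) (adj A * A)))"

definition Zop :: "nat \<Rightarrow> complex mat" where
  "Zop d = mat d d (\<lambda>(i,j). if i = j then cis (2 * pi * real i / real d) else 0)"

definition dephasing :: "nat \<Rightarrow> real \<Rightarrow> complex mat \<Rightarrow> complex mat" where
  "dephasing d r \<rho> = complex_of_real r \<cdot>\<^sub>m \<rho> + complex_of_real (1 - r) \<cdot>\<^sub>m (Zop d * \<rho> * adj (Zop d))"

(* (N \<otimes> id)(rho) for rho on C^d \<otimes> C^d', basis index of |a>|k> is a*d' + k *)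
definition tensor_id :: "(complex mat \<Rightarrow> complex mat) \<Rightarrow> nat \<Rightarrow> nat \<Rightarrow> complex mat \<Rightarrow> complex mat" where
  "tensor_id N d d' \<rho> = mat (d * d') (d * d') (\<lambda>(i,j).
      N (mat d d (\<lambda>(a,b). \<rho> $$ (a * d' + i mod d', b * d' + j mod d'))) $$ (i div d', j div d'))"

definition succ_single :: "(complex mat \<Rightarrow> complex mat) \<Rightarrow> (complex mat \<Rightarrow> complex mat) \<Rightarrow> complex mat \<Rightarrow> real" where
  "succ_single N1 N2 \<rho> = 1/2 + 1/4 * trace_norm (N1 \<rho> - N2 \<rho>)"

definition succ_general :: "(complex mat \<Rightarrow> complex mat) \<Rightarrow> (complex mat \<Rightarrow> complex mat) \<Rightarrow> nat \<Rightarrow> nat \<Rightarrow> complex mat \<Rightarrow> real" where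
  "succ_general N1 N2 d d' \<rho> = 1/2 + 1/4 * trace_norm (tensor_id N1 d d' \<rho> - tensor_id N2 d d' \<rho>)"

end

theory Submission
  imports Defs "Jordan_Normal_Form.Schur_Decomposition"
begin


lemma adj_dim[simp]: "dim_row (adj A) = dim_col A" "dim_col (adj A) = dim_row A"
  by (auto simp: adj_def)

lemma adj_carrier[simp]: "A \<in> carrier_mat n m \<Longrightarrow> adj A \<in> carrier_mat m n"
  by (auto simp: adj_def)

lemma adj_index[simp]: "i < dim_col A \<Longrightarrow> j < dim_row A \<Longrightarrow> adj A $$ (i,j) = cnj (A $$ (j,i))"
  by (auto simp: adj_def)

lemma adj_adj[simp]: "adj (adj A) = A"
  by (rule eq_matI) auto

lemma adj_mult: assumes "A \<in> carrier_mat n m" "B \<in> carrier_mat m k"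
  shows "adj (A * B) = adj B * adj A"
  using assms by (intro eq_matI) (auto simp: scalar_prod_def mult.commute)

lemma adj_add: assumes "A \<in> carrier_mat n m" "B \<in> carrier_mat n m"
  shows "adj (A + B) = adj A + adj B"
  using assms by (intro eq_matI) auto

lemma adj_minus: assumes "A \<in> carrier_mat n m" "B \<in> carrier_mat n m"
  shows "adj (A - B) = adj A - adj B"
  using assms by (intro eq_matI) auto

lemma adj_smult: "adj (c \<cdot>\<^sub>m A) = cnj c \<cdot>\<^sub>m adj A"
  by (intro eq_matI) auto

lemma adj_one[simp]: "adj (1\<^sub>m n) = 1\<^sub>m n"
  by (intro eq_matI) auto

lemma adj_zero[simp]: "adj (0\<^sub>m n m) = 0\<^sub>m m n"
  by (intro eq_matI) auto

definition herm :: "nat \<Rightarrow> complex mat \<Rightarrow> bool" where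
  "herm n A \<longleftrightarrow> A \<in> carrier_mat n n \<and> adj A = A"

definition qf :: "complex mat \<Rightarrow> complex vec \<Rightarrow> complex" where
  "qf A v = (\<Sum>i<dim_vec v. cnj (v $ i) * (A *\<^sub>v v) $ i)"

lemma psd_qf: "psd n A \<longleftrightarrow> A \<in> carrier_mat n n \<and> (\<forall>v \<in> carrier_vec n. Im (qf A v) = 0 \<and> Re (qf A v) \<ge> 0)"
  unfolding psd_def qf_def Let_def by auto

lemma adj_mult_self_zero: assumes X: "X \<in> carrier_mat n m" and Z: "adj X * X = 0\<^sub>m m m"
  shows "X = 0\<^sub>m n m"
proof (rule eq_matI)
  fix i j assume i: "i < dim_row (0\<^sub>m n m)" and j: "j < dim_col (0\<^sub>m n m)"
  have "(adj X * X) $$ (j,j) = 0" using Z j by simp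
  hence "(\<Sum>l<n. cnj (X $$ (l,j)) * X $$ (l,j)) = 0"
    using X j by (simp add: scalar_prod_def lessThan_atLeast0)
  moreover have cz: "\<And>z::complex. cnj z * z = complex_of_real ((cmod z)\<^sup>2)"
    by (metis complex_norm_square mult.commute)
  ultimately have s: "(\<Sum>l<n. complex_of_real ((cmod (X $$ (l,j)))\<^sup>2)) = 0"
    by (simp only: cz)
  hence "(\<Sum>l<n. (cmod (X $$ (l,j)))\<^sup>2) = 0"
    by (metis (mono_tags, lifting) of_real_eq_0_iff of_real_sum sum.cong)
  hence "\<forall>l\<in>{..<n}. (cmod (X $$ (l,j)))\<^sup>2 = 0"
    by (subst sum_nonneg_eq_0_iff[symmetric]) auto
  thus "X $$ (i,j) = 0\<^sub>m n m $$ (i,j)" using i j by auto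
qed (use X in auto)



lemma pow_comm: assumes H: "H \<in> carrier_mat n n" shows "H ^\<^sub>m k * H = H * H ^\<^sub>m k"
proof (induction k)
  case 0 then show ?case using H by simp
next
  case (Suc k)
  have "H ^\<^sub>m Suc k * H = (H ^\<^sub>m k * H) * H" by simp
  also have "\<dots> = (H * H ^\<^sub>m k) * H" using Suc by simp
  also have "\<dots> = H * (H ^\<^sub>m k * H)" by (metis assoc_mult_mat pow_carrier_mat H)
  finally show ?case by simp
qed

lemma pow_add: assumes H: "H \<in> carrier_mat n n" shows "H ^\<^sub>m (a + b) = H ^\<^sub>m a * H ^\<^sub>m b"
proof (induction b)
  case 0 then show ?case using H by simp
next
  case (Suc b)
  have "H ^\<^sub>m (a + Suc b) = H ^\<^sub>m (a + b) * H" by simp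
  also have "\<dots> = H ^\<^sub>m a * H ^\<^sub>m b * H" using Suc by simp
  also have "\<dots> = H ^\<^sub>m a * (H ^\<^sub>m b * H)" by (metis assoc_mult_mat pow_carrier_mat H)
  finally show ?case by simp
qed

lemma herm_pow: assumes H: "herm n H" shows "adj (H ^\<^sub>m k) = H ^\<^sub>m k"
proof (induction k)
  case 0 then show ?case using H by (simp add: herm_def)
next
  case (Suc k)
  have C: "H \<in> carrier_mat n n" using H by (simp add: herm_def)
  have "adj (H ^\<^sub>m Suc k) = adj H * adj (H ^\<^sub>m k)"
    using C by (simp add: adj_mult[of _ n n _ n])
  also have "\<dots> = H * H ^\<^sub>m k" using Suc H by (simp add: herm_def)
  finally show ?case using pow_comm[OF C] by simp
qed

lemma herm_nilpotent: assumes H: "herm n H" and m: "m \<ge> 1" and Z: "H ^\<^sub>m m = 0\<^sub>m n n"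
  shows "H = 0\<^sub>m n n"
  using m Z
proof (induction m rule: less_induct)
  case (less m)
  have C: "H \<in> carrier_mat n n" using H by (simp add: herm_def)
  show ?case
  proof (cases "m = 1")
    case True
    then show ?thesis using less C by (simp add: numeral_eq_Suc)
  next
    case False
    define j where "j = (m + 1) div 2"
    have j1: "j \<ge> 1" "j < m" "j + j \<ge> m" using False less(2) unfolding j_def by auto
    have "H ^\<^sub>m (j + j) = H ^\<^sub>m (j + j - m) * H ^\<^sub>m m"
      using pow_add[OF C, of "j+j-m" m] j1 by simp
    also have "\<dots> = 0\<^sub>m n n" using less(3) C by simp
    finally have "adj (H ^\<^sub>m j) * H ^\<^sub>m j = 0\<^sub>m n n"
      using pow_add[OF C, of j j] herm_pow[OF H] by simp
    hence "H ^\<^sub>m j = 0\<^sub>m n n" using adj_mult_self_zero[of "H ^\<^sub>m j" n n] C by simp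
    then show ?thesis using less(1)[of j] j1 by simp
  qed
qed

lemma strict_upper_pow: assumes B: "B \<in> carrier_mat n n" and U: "upper_triangular B"
  and D: "\<And>i. i < n \<Longrightarrow> B $$ (i,i) = 0"
  shows "i < n \<Longrightarrow> j < n \<Longrightarrow> j < i + k \<Longrightarrow> (B ^\<^sub>m k) $$ (i,j) = 0"
proof (induction k arbitrary: i j)
  case 0 then show ?case using B by simp
next
  case (Suc k)
  have "(B ^\<^sub>m Suc k) $$ (i,j) = (\<Sum>l\<in>{0..<n}. (B ^\<^sub>m k) $$ (i,l) * B $$ (l,j))"
    using Suc.prems B by (simp add: scalar_prod_def)
  also have "\<dots> = 0"
  proof (rule sum.neutral, rule ballI)
    fix l assume l: "l \<in> {0..<n}"
    show "(B ^\<^sub>m k) $$ (i,l) * B $$ (l,j) = 0"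
    proof (cases "l < i + k")
      case True then show ?thesis using Suc l by simp
    next
      case False
      hence "j \<le> l" using Suc.prems by simp
      then show ?thesis using U B D l Suc.prems
        by (cases "j = l") (auto simp: upper_triangular_def)
    qed
  qed
  finally show ?case .
qed

lemma herm_all_eig_zero: assumes H: "herm n H" and E: "\<And>\<mu>. eigenvalue H \<mu> \<Longrightarrow> \<mu> = 0"
  shows "H = 0\<^sub>m n n"
proof (cases "n = 0")
  case True then show ?thesis using H by (auto simp: herm_def)
next
  case False
  have C: "H \<in> carrier_mat n n" using H by (simp add: herm_def)
  obtain es where es: "char_poly H = (\<Prod>a\<leftarrow>es. [:- a, 1:])" "length es = n"
    using char_poly_factorized[OF C] by blast
  have ez: "e = 0" if "e \<in> set es" for e
  proof -
    have "poly (char_poly H) e = 0" unfolding es(1) poly_prod_list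
      using that by (induction es) (auto)
    thus ?thesis using E eigenvalue_root_char_poly[OF C] by blast
  qed
  obtain B P Q where S: "schur_decomposition H es = (B,P,Q)" by (cases "schur_decomposition H es") auto
  from schur_decomposition[OF C es(1) S] have
    sim: "similar_mat_wit H B P Q" and ut: "upper_triangular B" and dg: "diag_mat B = es" by auto
  from sim C have BC: "B \<in> carrier_mat n n" "P \<in> carrier_mat n n" "Q \<in> carrier_mat n n"
    unfolding similar_mat_wit_def Let_def by auto
  have Bd: "B $$ (i,i) = 0" if "i < n" for i
  proof -
    have "B $$ (i,i) = diag_mat B ! i" using that BC by (simp add: diag_mat_def)
    also have "\<dots> \<in> set es" using dg that es(2) by auto
    finally show ?thesis using ez by blast
  qed
  have "B ^\<^sub>m n = 0\<^sub>m n n"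
    by (rule eq_matI) (use strict_upper_pow[OF BC(1) ut Bd] BC in auto)
  hence "H ^\<^sub>m n = 0\<^sub>m n n" using similar_mat_wit_pow_id[OF sim, of n] BC by simp
  then show ?thesis using herm_nilpotent[OF H, of n] False by simp
qed



lemma mtrace_comm: assumes A: "A \<in> carrier_mat n k" and B: "B \<in> carrier_mat k n"
  shows "mtrace (A * B) = mtrace (B * A)"
proof -
  have "mtrace (A * B) = (\<Sum>i<n. \<Sum>l<k. A $$ (i,l) * B $$ (l,i))"
    using A B by (simp add: mtrace_def scalar_prod_def lessThan_atLeast0)
  also have "\<dots> = (\<Sum>l<k. \<Sum>i<n. B $$ (l,i) * A $$ (i,l))"
    by (subst sum.swap) (simp add: mult.commute)
  also have "\<dots> = mtrace (B * A)"
    using A B by (simp add: mtrace_def scalar_prod_def lessThan_atLeast0)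
  finally show ?thesis .
qed

lemma mtrace_one[simp]: "mtrace (1\<^sub>m n) = of_nat n"
  by (simp add: mtrace_def)

definition dg :: "nat \<Rightarrow> (nat \<Rightarrow> real) \<Rightarrow> complex mat" where
  "dg k l = mat k k (\<lambda>(i,j). if i = j then complex_of_real (l i) else 0)"

lemma dg_carrier[simp]: "dg k l \<in> carrier_mat k k" by (simp add: dg_def)
lemma dg_dim[simp]: "dim_row (dg k l) = k" "dim_col (dg k l) = k" by (auto simp: dg_def)
lemma adj_dg[simp]: "adj (dg k l) = dg k l"
  by (rule eq_matI) (auto simp: dg_def)

lemma qf_sum: assumes "A \<in> carrier_mat n n" "x \<in> carrier_vec n"
  shows "qf A x = (\<Sum>i<n. \<Sum>j<n. cnj (x $ i) * A $$ (i,j) * x $ j)"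
  using assms by (simp add: qf_def scalar_prod_def lessThan_atLeast0 sum_distrib_left mult.assoc)

lemma cnj_mult_self: "cnj z * z = complex_of_real ((cmod z)\<^sup>2)"
  by (metis complex_norm_square mult.commute)

lemma qf_norm: "(\<Sum>i<n. cnj (x $ i) * x $ i) = complex_of_real (\<Sum>i<n. (cmod (x $ i))\<^sup>2)"
  by (simp only: cnj_mult_self of_real_sum)

lemma qf_herm_real: assumes H: "herm n A" and x: "x \<in> carrier_vec n"
  shows "cnj (qf A x) = qf A x"
proof -
  have C: "A \<in> carrier_mat n n" and adjA: "adj A = A" using H by (auto simp: herm_def)
  have e: "cnj (A $$ (i,j)) = A $$ (j,i)" if "i < n" "j < n" for i j
  proof -
    have "A $$ (j,i) = adj A $$ (j,i)" using adjA by simp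
    also have "\<dots> = cnj (A $$ (i,j))" using C that by simp
    finally show ?thesis by simp
  qed
  have "cnj (qf A x) = (\<Sum>i<n. \<Sum>j<n. x $ i * cnj (A $$ (i,j)) * cnj (x $ j))"
    unfolding qf_sum[OF C x] by simp
  also have "\<dots> = (\<Sum>i<n. \<Sum>j<n. x $ i * A $$ (j,i) * cnj (x $ j))"
    by (intro sum.cong refl) (simp add: e)
  also have "\<dots> = (\<Sum>j<n. \<Sum>i<n. x $ i * A $$ (j,i) * cnj (x $ j))"
    by (rule sum.swap)
  also have "\<dots> = (\<Sum>j<n. \<Sum>i<n. cnj (x $ j) * A $$ (j,i) * x $ i)"
    by (intro sum.cong refl) (simp only: mult.commute mult.left_commute)
  also have "\<dots> = qf A x" using qf_sum[OF C x] by simp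
  finally show ?thesis .
qed

lemma vec_norm_pos: assumes x: "x \<in> carrier_vec n" "x \<noteq> 0\<^sub>v n"
  shows "(\<Sum>i<n. (cmod (x $ i))\<^sup>2) > 0"
proof -
  obtain i where i: "i < n" "x $ i \<noteq> 0" using x by (metis eq_vecI carrier_vecD index_zero_vec(1,2))
  have "(cmod (x $ i))\<^sup>2 \<le> (\<Sum>i<n. (cmod (x $ i))\<^sup>2)"
    using i by (intro member_le_sum) auto
  moreover have "(cmod (x $ i))\<^sup>2 > 0" using i by simp
  ultimately show ?thesis by linarith
qed


lemma herm_eig_real: assumes H: "herm n A" and x: "x \<in> carrier_vec n" "x \<noteq> 0\<^sub>v n"
  and E: "A *\<^sub>v x = \<mu> \<cdot>\<^sub>v x"
  shows "\<mu> = complex_of_real (Re \<mu>)"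
proof -
  have C: "A \<in> carrier_mat n n" using H by (auto simp: herm_def)
  define s where "s = (\<Sum>i<n. (cmod (x $ i))\<^sup>2)"
  have s: "s > 0" using vec_norm_pos[OF x] s_def by simp
  have "qf A x = (\<Sum>i<n. cnj (x $ i) * (\<mu> * x $ i))"
    using x E C unfolding qf_def by (intro sum.cong) auto
  also have "\<dots> = \<mu> * (\<Sum>i<n. cnj (x $ i) * x $ i)"
    unfolding sum_distrib_left by (intro sum.cong refl) (simp only: mult.commute mult.left_commute)
  finally have q: "qf A x = \<mu> * complex_of_real s" unfolding qf_norm s_def .
  have "cnj \<mu> * complex_of_real s = \<mu> * complex_of_real s"
    using qf_herm_real[OF H x(1)] q by simp
  hence "cnj \<mu> = \<mu>" using s by simp
  thus ?thesis by (metis Reals_cnj_iff complex_is_Real_iff of_real_Re)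
qed



lemma smult_vec_cancel: assumes "(\<mu>::complex) \<noteq> 0" "\<mu> \<cdot>\<^sub>v a = \<mu> \<cdot>\<^sub>v b" shows "a = b"
proof -
  have "(1/\<mu>) \<cdot>\<^sub>v (\<mu> \<cdot>\<^sub>v a) = (1/\<mu>) \<cdot>\<^sub>v (\<mu> \<cdot>\<^sub>v b)" using assms by simp
  thus ?thesis using assms(1) by (simp add: smult_smult_assoc)
qed

lemma minus_zero_mat'[simp]: "(A :: complex mat) \<in> carrier_mat n m \<Longrightarrow> A - 0\<^sub>m n m = A"
  by (intro eq_matI) auto

lemma zero_mult_vec'[simp]: "(x :: complex vec) \<in> carrier_vec n \<Longrightarrow> 0\<^sub>m k n *\<^sub>v x = 0\<^sub>v k"
  by (intro eq_vecI) (auto simp: scalar_prod_def)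

lemma step_eig:
  assumes H: "herm n A" and U: "U \<in> carrier_mat n k" and k: "k < n"
    and UU: "adj U * U = 1\<^sub>m k" and AU: "A * U = U * dg k l"
  shows "\<exists>x \<in> carrier_vec n. x \<noteq> 0\<^sub>v n \<and> adj U *\<^sub>v x = 0\<^sub>v k \<and> (\<exists>\<mu>. A *\<^sub>v x = complex_of_real \<mu> \<cdot>\<^sub>v x)"
proof -
  have C: "A \<in> carrier_mat n n" and adjA: "adj A = A" using H by (auto simp: herm_def)
  have aU: "adj U \<in> carrier_mat k n" using U by simp
  have UaU: "U * adj U \<in> carrier_mat n n" using U aU by simp
  define P where "P = 1\<^sub>m n - U * adj U"
  have PC: "P \<in> carrier_mat n n" using UaU by (simp add: P_def minus_carrier_mat)
  have adjP: "adj P = P"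
    unfolding P_def using U aU UaU by (simp add: adj_minus[of _ n n] adj_mult[of _ n k _ n])
  have UP: "adj U * P = 0\<^sub>m k n"
  proof -
    have "adj U * P = adj U * 1\<^sub>m n - adj U * (U * adj U)"
      unfolding P_def using aU UaU by (simp add: mult_minus_distrib_mat[OF aU one_carrier_mat UaU])
    also have "adj U * (U * adj U) = (adj U * U) * adj U" using aU U by (metis assoc_mult_mat)
    also have "\<dots> = adj U" using UU aU by (simp add: left_mult_one_mat)
    finally show ?thesis using aU by (simp add: right_mult_one_mat)
  qed
  have PU: "P * U = 0\<^sub>m n k"
  proof -
    have "adj (adj U * P) = adj P * U" using aU PC by (simp add: adj_mult[of _ k n _ n])
    thus ?thesis using UP adjP by simp
  qed
  have PP: "P * P = P"
  proof -
    have "P * P = P * 1\<^sub>m n - P * (U * adj U)"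
      unfolding P_def[of] using PC UaU
      by (metis P_def mult_minus_distrib_mat one_carrier_mat)
    also have "P * (U * adj U) = (P * U) * adj U" using PC U aU by (metis assoc_mult_mat)
    also have "\<dots> = 0\<^sub>m n n" using PU aU by (simp add: left_mult_zero_mat)
    finally show ?thesis using PC by (simp add: right_mult_one_mat)
  qed
  have aUA: "adj U * A = dg k l * adj U"
  proof -
    have "adj U * A = adj (A * U)" using C U adjA by (simp add: adj_mult[of _ n n _ k])
    also have "\<dots> = dg k l * adj U" using AU U by (simp add: adj_mult[of _ n k _ k])
    finally show ?thesis .
  qed
  have AP: "A * P = P * A"
  proof -
    have "A * P = A * 1\<^sub>m n - A * (U * adj U)"
      unfolding P_def using C UaU by (simp add: mult_minus_distrib_mat[OF C one_carrier_mat UaU])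
    also have "A * (U * adj U) = (A * U) * adj U" using C U aU by (metis assoc_mult_mat)
    also have "\<dots> = U * dg k l * adj U" using AU by simp
    finally have 1: "A * P = A - U * dg k l * adj U" using C by simp
    have "P * A = 1\<^sub>m n * A - (U * adj U) * A"
      unfolding P_def using C UaU by (simp add: minus_mult_distrib_mat[OF one_carrier_mat UaU C])
    also have "(U * adj U) * A = U * (adj U * A)" using C U aU by (metis assoc_mult_mat)
    also have "\<dots> = U * dg k l * adj U" using aUA U aU by (metis assoc_mult_mat dg_carrier)
    finally have 2: "P * A = A - U * dg k l * adj U" using C by simp
    show ?thesis using 1 2 by simp
  qed
  define A' where "A' = A * P"
  have A'C: "A' \<in> carrier_mat n n" using C PC by (simp add: A'_def)
  have hA': "herm n A'"
    unfolding herm_def A'_def using C PC adjA adjP AP by (simp add: adj_mult[of _ n n _ n])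
  show ?thesis
  proof (cases "\<exists>\<mu>. eigenvalue A' \<mu> \<and> \<mu> \<noteq> 0")
    case True
    then obtain \<mu> x where mu: "\<mu> \<noteq> 0" and x: "x \<in> carrier_vec n" "x \<noteq> 0\<^sub>v n" "A' *\<^sub>v x = \<mu> \<cdot>\<^sub>v x"
      using A'C unfolding eigenvalue_def eigenvector_def by auto
    have "P *\<^sub>v (A' *\<^sub>v x) = (P * A') *\<^sub>v x" using PC A'C x by simp
    also have "P * A' = (P * A) * P" unfolding A'_def using PC C by simp
    also have "\<dots> = A * (P * P)" using AP PC C by (metis assoc_mult_mat)
    also have "\<dots> = A'" using PP A'_def by simp
    finally have "\<mu> \<cdot>\<^sub>v (P *\<^sub>v x) = \<mu> \<cdot>\<^sub>v x" using x PC by (simp add: mult_mat_vec)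
    hence Px: "P *\<^sub>v x = x" by (rule smult_vec_cancel[OF mu])
    have "adj U *\<^sub>v x = (adj U * P) *\<^sub>v x" using Px aU PC x by simp
    hence ax: "adj U *\<^sub>v x = 0\<^sub>v k" using UP x by simp
    have "A *\<^sub>v x = A' *\<^sub>v x" unfolding A'_def using Px C PC x by simp
    hence Ax: "A *\<^sub>v x = \<mu> \<cdot>\<^sub>v x" using x by simp
    have "\<mu> = complex_of_real (Re \<mu>)" by (rule herm_eig_real[OF H x(1,2) Ax])
    then show ?thesis using x ax Ax by metis
  next
    case False
    hence "A' = 0\<^sub>m n n" using herm_all_eig_zero[OF hA'] by blast
    have "\<exists>j<n. col P j \<noteq> 0\<^sub>v n"
    proof (rule ccontr)
      assume "\<not> ?thesis"
      hence cz: "\<And>j. j < n \<Longrightarrow> col P j = 0\<^sub>v n" by blast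
      have "P = 0\<^sub>m n n"
      proof (rule eq_matI)
        fix i j assume ij: "i < dim_row (0\<^sub>m n n)" "j < dim_col (0\<^sub>m n n)"
        have "col P j $ i = 0" using cz[of j] ij by simp
        thus "P $$ (i, j) = 0\<^sub>m n n $$ (i, j)" using ij PC by simp
      qed (use PC in auto)
      have "U * adj U = 1\<^sub>m n"
      proof (rule eq_matI)
        fix i j assume ij: "i < dim_row (1\<^sub>m n)" "j < dim_col (1\<^sub>m n)"
        have "P $$ (i,j) = 0" using \<open>P = 0\<^sub>m n n\<close> ij by simp
        moreover have "P $$ (i,j) = 1\<^sub>m n $$ (i,j) - (U * adj U) $$ (i,j)"
          unfolding P_def by (rule index_minus_mat) (use UaU ij in auto)
        ultimately show "(U * adj U) $$ (i, j) = 1\<^sub>m n $$ (i, j)" by simp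
      qed (use UaU in auto)
      hence "mtrace (U * adj U) = of_nat n" by simp
      moreover have "mtrace (U * adj U) = mtrace (adj U * U)" by (rule mtrace_comm[OF U aU])
      ultimately have "of_nat n = (of_nat k :: complex)" using UU by simp
      thus False using k by simp
    qed
    then obtain j where j: "j < n" "col P j \<noteq> 0\<^sub>v n" by blast
    define x where "x = col P j"
    have xc: "x \<in> carrier_vec n" using PC by (simp add: x_def carrier_vecI)
    have "adj U *\<^sub>v x = col (adj U * P) j" unfolding x_def using aU PC j by (metis col_mult2)
    hence ax: "adj U *\<^sub>v x = 0\<^sub>v k" using UP j by simp
    have "A *\<^sub>v x = col A' j" unfolding x_def A'_def using C PC j by (metis col_mult2)
    hence Ax: "A *\<^sub>v x = complex_of_real 0 \<cdot>\<^sub>v x" using \<open>A' = 0\<^sub>m n n\<close> j xc by auto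
    show ?thesis using xc j ax Ax x_def by blast
  qed
qed



lemma mult_dg_index: assumes U: "U \<in> carrier_mat m k" and i: "i < m" and j: "j < k"
  shows "(U * dg k l) $$ (i,j) = U $$ (i,j) * complex_of_real (l j)"
proof -
  have "(U * dg k l) $$ (i,j) = (\<Sum>t\<in>{0..<k}. U $$ (i,t) * (if t = j then complex_of_real (l j) else 0))"
    using U i j by (simp add: scalar_prod_def dg_def cong: if_cong)
  also have "\<dots> = U $$ (i,j) * complex_of_real (l j)"
    using j by (simp add: if_distrib cong: if_cong)
  finally show ?thesis .
qed

lemma spectral_k: assumes H: "herm n A" shows "k \<le> n \<Longrightarrow> \<exists>U l. U \<in> carrier_mat n k \<and> adj U * U = 1\<^sub>m k \<and> A * U = U * dg k l"
proof (induction k)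
  case 0
  have C: "A \<in> carrier_mat n n" using H by (simp add: herm_def)
  show ?case
    by (rule exI[of _ "0\<^sub>m n 0"], rule exI[of _ "\<lambda>_. 0"]) (use C in \<open>auto intro!: eq_matI\<close>)
next
  case (Suc k)
  have C: "A \<in> carrier_mat n n" using H by (simp add: herm_def)
  obtain U l where U: "U \<in> carrier_mat n k" "adj U * U = 1\<^sub>m k" "A * U = U * dg k l"
    using Suc by auto
  have kn: "k < n" using Suc by simp
  obtain x \<mu> where x: "x \<in> carrier_vec n" "x \<noteq> 0\<^sub>v n" "adj U *\<^sub>v x = 0\<^sub>v k"
    "A *\<^sub>v x = complex_of_real \<mu> \<cdot>\<^sub>v x"
    using step_eig[OF H U(1) kn U(2) U(3)] by blast
  define s where "s = sqrt (\<Sum>i<n. (cmod (x $ i))\<^sup>2)"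
  have s: "s > 0" using vec_norm_pos[OF x(1,2)] by (simp add: s_def)
  define w where "w = vec n (\<lambda>i. x $ i / complex_of_real s)"
  define U' where "U' = mat n (Suc k) (\<lambda>(i,j). if j < k then U $$ (i,j) else w $ i)"
  define l' where "l' = l(k := \<mu>)"
  have U'C: "U' \<in> carrier_mat n (Suc k)" by (simp add: U'_def)
  have aUw: "(\<Sum>r<n. cnj (U $$ (r,i)) * w $ r) = 0" if i: "i < k" for i
  proof -
    have "(adj U *\<^sub>v x) $ i = 0" using x(3) i by simp
    hence "(\<Sum>r<n. cnj (U $$ (r,i)) * x $ r) = 0"
      using U(1) x(1) i by (simp add: scalar_prod_def lessThan_atLeast0)
    hence "(\<Sum>r<n. cnj (U $$ (r,i)) * x $ r) / complex_of_real s = 0" by simp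
    thus ?thesis unfolding w_def sum_divide_distrib by (simp add: lessThan_atLeast0)
  qed
  have ww: "(\<Sum>r<n. cnj (w $ r) * w $ r) = 1"
  proof -
    have "(\<Sum>r<n. cnj (w $ r) * w $ r) = complex_of_real (\<Sum>r<n. (cmod (w $ r))\<^sup>2)"
      by (rule qf_norm)
    also have "(\<Sum>r<n. (cmod (w $ r))\<^sup>2) = (\<Sum>r<n. (cmod (x $ r))\<^sup>2) / s\<^sup>2"
      unfolding w_def sum_divide_distrib using s
      by (intro sum.cong refl) (simp add: norm_divide power_divide)
    also have "\<dots> = 1" using s unfolding s_def
      by (simp add: sum_nonneg)
    finally show ?thesis by simp
  qed
  have 1: "adj U' * U' = 1\<^sub>m (Suc k)"
  proof (rule eq_matI)
    fix i j assume ij: "i < dim_row (1\<^sub>m (Suc k))" "j < dim_col (1\<^sub>m (Suc k))"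
    have e: "(adj U' * U') $$ (i,j) = (\<Sum>r<n. cnj (U' $$ (r,i)) * U' $$ (r,j))"
      using ij U'C by (simp add: scalar_prod_def lessThan_atLeast0)
    show "(adj U' * U') $$ (i,j) = 1\<^sub>m (Suc k) $$ (i,j)"
    proof (cases "i < k")
      case ik: True
      show ?thesis
      proof (cases "j < k")
        case True
        have "(adj U * U) $$ (i,j) = (\<Sum>r<n. cnj (U $$ (r,i)) * U $$ (r,j))"
          using ik True U(1) by (simp add: scalar_prod_def lessThan_atLeast0)
        then show ?thesis using e ik True U(2) by (simp add: U'_def)
      next
        case False
        hence "j = k" using ij by simp
        then show ?thesis using e ik aUw[OF ik] by (simp add: U'_def)
      qed
    next
      case False
      hence ik: "i = k" using ij by simp
      show ?thesis
      proof (cases "j < k")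
        case True
        have "cnj (\<Sum>r<n. cnj (U $$ (r,j)) * w $ r) = 0" using aUw[OF True] by simp
        hence "(\<Sum>r<n. cnj (w $ r) * U $$ (r,j)) = 0" by (simp add: mult.commute)
        then show ?thesis using e ik True by (simp add: U'_def)
      next
        case False
        hence "j = k" using ij by simp
        then show ?thesis using e ik ww by (simp add: U'_def)
      qed
    qed
  qed (auto simp: U'_def)
  have 2: "A * U' = U' * dg (Suc k) l'"
  proof (rule eq_matI)
    fix i j assume ij: "i < dim_row (U' * dg (Suc k) l')" "j < dim_col (U' * dg (Suc k) l')"
    hence i: "i < n" and j: "j < Suc k" using U'C by auto
    have e: "(A * U') $$ (i,j) = (\<Sum>r<n. A $$ (i,r) * U' $$ (r,j))"
      using i j U'C C by (simp add: scalar_prod_def lessThan_atLeast0)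
    have r: "(U' * dg (Suc k) l') $$ (i,j) = U' $$ (i,j) * complex_of_real (l' j)"
      by (rule mult_dg_index[OF U'C i j])
    show "(A * U') $$ (i,j) = (U' * dg (Suc k) l') $$ (i,j)"
    proof (cases "j < k")
      case True
      have "(A * U) $$ (i,j) = (\<Sum>r<n. A $$ (i,r) * U $$ (r,j))"
        using i True U(1) C by (simp add: scalar_prod_def lessThan_atLeast0)
      moreover have "(A * U) $$ (i,j) = U $$ (i,j) * complex_of_real (l j)"
        using U(3) mult_dg_index[OF U(1) i True] by simp
      ultimately show ?thesis using e r True i by (simp add: U'_def l'_def)
    next
      case False
      hence jk: "j = k" using j by simp
      have "(A *\<^sub>v x) $ i = (\<Sum>r<n. A $$ (i,r) * x $ r)"
        using i C x(1) by (simp add: scalar_prod_def lessThan_atLeast0)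
      hence "(\<Sum>r<n. A $$ (i,r) * x $ r) = complex_of_real \<mu> * x $ i" using x(4) i x(1) by simp
      hence "(\<Sum>r<n. A $$ (i,r) * x $ r) / complex_of_real s = complex_of_real \<mu> * x $ i / complex_of_real s"
        by simp
      hence "(\<Sum>r<n. A $$ (i,r) * w $ r) = w $ i * complex_of_real \<mu>"
        unfolding w_def sum_divide_distrib using i by (simp add: lessThan_atLeast0 mult.commute)
      then show ?thesis using e r jk i by (simp add: U'_def l'_def)
    qed
  qed (use U'C C in auto)
  show ?case using U'C 1 2 by blast
qed

lemma spectral: assumes H: "herm n A"
  shows "\<exists>U l. U \<in> carrier_mat n n \<and> adj U * U = 1\<^sub>m n \<and> U * adj U = 1\<^sub>m n \<and> A * U = U * dg n l \<and> A = U * dg n l * adj U"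
proof -
  have C: "A \<in> carrier_mat n n" using H by (simp add: herm_def)
  obtain U l where U: "U \<in> carrier_mat n n" "adj U * U = 1\<^sub>m n" "A * U = U * dg n l"
    using spectral_k[OF H, of n] by auto
  have U2: "U * adj U = 1\<^sub>m n" using mat_mult_left_right_inverse[OF adj_carrier[OF U(1)] U(1) U(2)] .
  have "A = A * (U * adj U)" using U2 C by simp
  also have "\<dots> = (A * U) * adj U" using C U(1) by (metis assoc_mult_mat adj_carrier)
  finally have "A = U * dg n l * adj U" using U(3) by simp
  thus ?thesis using U U2 by blast
qed



definition ip :: "complex vec \<Rightarrow> complex vec \<Rightarrow> complex" where
  "ip x y = (\<Sum>i<dim_vec x. cnj (x $ i) * y $ i)"

lemma qf_ip: "x \<in> carrier_vec n \<Longrightarrow> qf A x = ip x (A *\<^sub>v x)"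
  by (simp add: qf_def ip_def)

lemma ip_adj: assumes A: "A \<in> carrier_mat n m" and x: "x \<in> carrier_vec m" and y: "y \<in> carrier_vec n"
  shows "ip y (A *\<^sub>v x) = ip (adj A *\<^sub>v y) x"
proof -
  have "ip y (A *\<^sub>v x) = (\<Sum>i<n. \<Sum>j<m. cnj (y $ i) * A $$ (i,j) * x $ j)"
    using A x y by (simp add: ip_def scalar_prod_def lessThan_atLeast0 sum_distrib_left mult.assoc)
  also have "\<dots> = (\<Sum>j<m. \<Sum>i<n. cnj (y $ i) * A $$ (i,j) * x $ j)" by (rule sum.swap)
  also have "\<dots> = (\<Sum>j<m. (\<Sum>i<n. cnj (y $ i) * A $$ (i,j)) * x $ j)"
    by (simp add: sum_distrib_right)
  also have "\<dots> = ip (adj A *\<^sub>v y) x"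
    using A x y by (simp add: ip_def scalar_prod_def lessThan_atLeast0 mult.commute)
  finally show ?thesis .
qed

lemma ip_smult_right: "ip x (c \<cdot>\<^sub>v y) = c * ip x y" if "dim_vec y = dim_vec x"
  using that by (simp add: ip_def sum_distrib_left mult.commute mult.left_commute)

lemma ip_smult_left: "ip (c \<cdot>\<^sub>v x) y = cnj c * ip x y"
  by (simp add: ip_def sum_distrib_left mult.commute mult.left_commute)

lemma ip_add_right: "dim_vec y = dim_vec x \<Longrightarrow> dim_vec z = dim_vec x \<Longrightarrow> ip x (y + z) = ip x y + ip x z"
  by (simp add: ip_def sum.distrib algebra_simps)

lemma ip_self: "ip x x = complex_of_real (\<Sum>i<dim_vec x. (cmod (x $ i))\<^sup>2)"
  unfolding ip_def by (rule qf_norm)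

lemma ip_dg: assumes y: "y \<in> carrier_vec n"
  shows "ip y (dg n l *\<^sub>v y) = complex_of_real (\<Sum>j<n. l j * (cmod (y $ j))\<^sup>2)"
proof -
  have "dg n l *\<^sub>v y = vec n (\<lambda>j. complex_of_real (l j) * y $ j)"
  proof (rule eq_vecI)
    fix j assume j: "j < dim_vec (vec n (\<lambda>j. complex_of_real (l j) * y $ j))"
    have "(dg n l *\<^sub>v y) $ j = (\<Sum>t\<in>{0..<n}. (if j = t then complex_of_real (l j) else 0) * y $ t)"
      using j y by (simp add: scalar_prod_def dg_def cong: if_cong)
    also have "\<dots> = (\<Sum>t\<in>{0..<n}. if j = t then complex_of_real (l j) * y $ t else 0)"
      by (rule sum.cong) auto
    also have "\<dots> = complex_of_real (l j) * y $ j" using j by simp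
    finally show "(dg n l *\<^sub>v y) $ j = vec n (\<lambda>j. complex_of_real (l j) * y $ j) $ j" using j by simp
  qed (use y in auto)
  hence "ip y (dg n l *\<^sub>v y) = (\<Sum>j<n. complex_of_real (l j) * (cnj (y $ j) * y $ j))"
    using y by (simp add: ip_def mult.commute mult.left_commute)
  also have "\<dots> = complex_of_real (\<Sum>j<n. l j * (cmod (y $ j))\<^sup>2)"
    by (simp only: cnj_mult_self of_real_sum of_real_mult)
  finally show ?thesis .
qed

lemma qf_spec: assumes U: "U \<in> carrier_mat n n" and UU: "adj U * U = 1\<^sub>m n"
  and B: "B = U * dg n l * adj U" and y: "y \<in> carrier_vec n"
  shows "qf B (U *\<^sub>v y) = complex_of_real (\<Sum>j<n. l j * (cmod (y $ j))\<^sup>2)"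
proof -
  have aU: "adj U \<in> carrier_mat n n" using U by simp
  have Uy: "U *\<^sub>v y \<in> carrier_vec n" using U y by simp
  have dy: "dg n l *\<^sub>v y \<in> carrier_vec n" by (rule mult_mat_vec_carrier[OF dg_carrier y])
  have UUy: "adj U *\<^sub>v (U *\<^sub>v y) = y"
  proof -
    have "adj U *\<^sub>v (U *\<^sub>v y) = (adj U * U) *\<^sub>v y" by (rule assoc_mult_mat_vec[OF aU U y, symmetric])
    also have "\<dots> = y" using UU y by simp
    finally show ?thesis .
  qed
  have "B *\<^sub>v (U *\<^sub>v y) = (U * dg n l) *\<^sub>v (adj U *\<^sub>v (U *\<^sub>v y))"
    unfolding B by (rule assoc_mult_mat_vec[OF mult_carrier_mat[OF U dg_carrier] aU Uy])
  also have "\<dots> = (U * dg n l) *\<^sub>v y" by (simp only: UUy)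
  also have "\<dots> = U *\<^sub>v (dg n l *\<^sub>v y)" by (rule assoc_mult_mat_vec[OF U dg_carrier y])
  finally have BU: "B *\<^sub>v (U *\<^sub>v y) = U *\<^sub>v (dg n l *\<^sub>v y)" .
  have "qf B (U *\<^sub>v y) = ip (U *\<^sub>v y) (U *\<^sub>v (dg n l *\<^sub>v y))" unfolding qf_ip[OF Uy] BU ..
  also have "\<dots> = ip (adj U *\<^sub>v (U *\<^sub>v y)) (dg n l *\<^sub>v y)"
    by (rule ip_adj[OF U dy Uy])
  also have "\<dots> = ip y (dg n l *\<^sub>v y)" by (simp only: UUy)
  finally show ?thesis unfolding ip_dg[OF y] .
qed

lemma unit_vec_cmod: assumes j: "j < n" shows "(\<Sum>i<n. l i * (cmod (unit_vec n j $ i))\<^sup>2) = l j"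
proof -
  have "(\<Sum>i<n. l i * (cmod (unit_vec n j $ i))\<^sup>2) = (\<Sum>i<n. if j = i then l i else 0)"
    by (rule sum.cong) (auto simp: unit_vec_def)
  thus ?thesis using j by simp
qed

lemma psd_spec_nonneg: assumes P: "psd n B" and U: "U \<in> carrier_mat n n" and UU: "adj U * U = 1\<^sub>m n"
  and B: "B = U * dg n l * adj U" and j: "j < n"
  shows "l j \<ge> 0"
proof -
  have "qf B (U *\<^sub>v unit_vec n j) = complex_of_real (l j)"
    using qf_spec[OF U UU B, of "unit_vec n j"] unit_vec_cmod[OF j] by simp
  moreover have "Re (qf B (U *\<^sub>v unit_vec n j)) \<ge> 0" using P U unfolding psd_qf by simp
  ultimately show ?thesis by simp
qed



lemma qf2: assumes B: "B \<in> carrier_mat n n" and a: "a < n" and b: "b < n" and ab: "a \<noteq> b"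
  shows "qf B (vec n (\<lambda>i. if i = a then 1 else if i = b then c else 0))
    = B $$ (a,a) + c * B $$ (a,b) + cnj c * B $$ (b,a) + cnj c * c * B $$ (b,b)"
proof -
  define v where "v = vec n (\<lambda>i. if i = a then 1 else if i = b then c else 0)"
  have vc: "v \<in> carrier_vec n" by (simp add: v_def)
  have v0: "\<And>i. i < n \<Longrightarrow> i \<notin> {a,b} \<Longrightarrow> v $ i = 0" by (auto simp: v_def)
  have va: "v $ a = 1" "v $ b = c" using a b ab by (auto simp: v_def)
  have sub: "{a,b} \<subseteq> {..<n}" using a b by auto
  have inner: "(\<Sum>j<n. cnj (v $ i) * B $$ (i,j) * v $ j) = (\<Sum>j\<in>{a,b}. cnj (v $ i) * B $$ (i,j) * v $ j)" for i
    by (rule sum.mono_neutral_right[OF _ sub]) (use v0 in auto)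
  have "qf B v = (\<Sum>i<n. \<Sum>j\<in>{a,b}. cnj (v $ i) * B $$ (i,j) * v $ j)"
    unfolding qf_sum[OF B vc] inner ..
  also have "\<dots> = (\<Sum>i\<in>{a,b}. \<Sum>j\<in>{a,b}. cnj (v $ i) * B $$ (i,j) * v $ j)"
    by (rule sum.mono_neutral_right[OF _ sub]) (use v0 in auto)
  also have "\<dots> = B $$ (a,a) + c * B $$ (a,b) + cnj c * B $$ (b,a) + cnj c * c * B $$ (b,b)"
    using ab va by (simp add: algebra_simps)
  finally show ?thesis unfolding v_def .
qed

lemma psd_herm: assumes P: "psd n B" shows "herm n B"
proof -
  have B: "B \<in> carrier_mat n n" using P by (simp add: psd_def)
  have real: "Im (qf B v) = 0" if "v \<in> carrier_vec n" for v using P that by (simp add: psd_qf)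
  have diag: "Im (B $$ (a,a)) = 0" if a: "a < n" for a
  proof -
    have "qf B (unit_vec n a) = (\<Sum>i<n. \<Sum>j<n. cnj (unit_vec n a $ i) * B $$ (i,j) * unit_vec n a $ j)"
      by (rule qf_sum[OF B]) simp
    also have "\<dots> = (\<Sum>i<n. if i = a then B $$ (a,a) else 0)"
      by (rule sum.cong[OF refl]) (auto simp: unit_vec_def if_distrib cong: if_cong)
    also have "\<dots> = B $$ (a,a)" using a by simp
    finally show ?thesis using real[of "unit_vec n a"] by simp
  qed
  have off: "B $$ (b,a) = cnj (B $$ (a,b))" if a: "a < n" and b: "b < n" and ab: "a \<noteq> b" for a b
  proof -
    have "Im (B $$ (a,a) + 1 * B $$ (a,b) + cnj 1 * B $$ (b,a) + cnj 1 * 1 * B $$ (b,b)) = 0"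
      using real[of "vec n (\<lambda>i. if i = a then 1 else if i = b then 1 else 0)"] qf2[OF B a b ab, of 1] by simp
    hence 1: "Im (B $$ (a,b)) + Im (B $$ (b,a)) = 0" using diag[OF a] diag[OF b] by simp
    have "Im (B $$ (a,a) + \<i> * B $$ (a,b) + cnj \<i> * B $$ (b,a) + cnj \<i> * \<i> * B $$ (b,b)) = 0"
      using real[of "vec n (\<lambda>i. if i = a then 1 else if i = b then \<i> else 0)"] qf2[OF B a b ab, of \<i>] by simp
    hence 2: "Re (B $$ (a,b)) - Re (B $$ (b,a)) = 0" using diag[OF a] diag[OF b] by simp
    show ?thesis using 1 2 by (intro complex_eqI) auto
  qed
  have "adj B = B"
  proof (rule eq_matI)
    fix i j assume ij: "i < dim_row B" "j < dim_col B"
    show "adj B $$ (i,j) = B $$ (i,j)"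
    proof (cases "i = j")
      case True
      then show ?thesis using ij B diag[of i] by (simp add: complex_eq_iff)
    next
      case False
      then show ?thesis using ij B off[of j i] by simp
    qed
  qed (use B in auto)
  thus ?thesis using B by (simp add: herm_def)
qed



lemma dg_mult_vec: assumes y: "y \<in> carrier_vec n"
  shows "dg n l *\<^sub>v y = vec n (\<lambda>j. complex_of_real (l j) * y $ j)"
proof (rule eq_vecI)
  fix j assume j: "j < dim_vec (vec n (\<lambda>j. complex_of_real (l j) * y $ j))"
  have "(dg n l *\<^sub>v y) $ j = (\<Sum>t\<in>{0..<n}. (if j = t then complex_of_real (l j) else 0) * y $ t)"
    using j y by (simp add: scalar_prod_def dg_def cong: if_cong)
  also have "\<dots> = (\<Sum>t\<in>{0..<n}. if j = t then complex_of_real (l j) * y $ t else 0)"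
    by (rule sum.cong) auto
  also have "\<dots> = complex_of_real (l j) * y $ j" using j by simp
  finally show "(dg n l *\<^sub>v y) $ j = vec n (\<lambda>j. complex_of_real (l j) * y $ j) $ j" using j by simp
qed (use y in auto)

lemma mult_zero_vec'[simp]: "(A :: complex mat) \<in> carrier_mat n m \<Longrightarrow> A *\<^sub>v 0\<^sub>v m = 0\<^sub>v n"
  by (intro eq_vecI) (auto simp: scalar_prod_def)

lemma psd_kernel: assumes P: "psd n B" and u: "u \<in> carrier_vec n" and q: "qf B u = 0"
  shows "B *\<^sub>v u = 0\<^sub>v n"
proof -
  have H: "herm n B" by (rule psd_herm[OF P])
  obtain U l where U: "U \<in> carrier_mat n n" "adj U * U = 1\<^sub>m n" "U * adj U = 1\<^sub>m n"
    "B * U = U * dg n l" "B = U * dg n l * adj U"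
    using spectral[OF H] by blast
  have aU: "adj U \<in> carrier_mat n n" using U(1) by simp
  define y where "y = adj U *\<^sub>v u"
  have yc: "y \<in> carrier_vec n" unfolding y_def by (rule mult_mat_vec_carrier[OF aU u])
  have uy: "U *\<^sub>v y = u"
  proof -
    have "U *\<^sub>v y = (U * adj U) *\<^sub>v u" unfolding y_def by (rule assoc_mult_mat_vec[OF U(1) aU u, symmetric])
    also have "\<dots> = u" using U(3) u by simp
    finally show ?thesis .
  qed
  have lpos: "l j \<ge> 0" if "j < n" for j by (rule psd_spec_nonneg[OF P U(1) U(2) U(5) that])
  have "complex_of_real (\<Sum>j<n. l j * (cmod (y $ j))\<^sup>2) = 0"
    using qf_spec[OF U(1) U(2) U(5) yc] q uy by simp
  hence "(\<Sum>j<n. l j * (cmod (y $ j))\<^sup>2) = 0" by (simp only: of_real_eq_0_iff)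
  hence z: "\<forall>j\<in>{..<n}. l j * (cmod (y $ j))\<^sup>2 = 0"
    by (subst sum_nonneg_eq_0_iff[symmetric]) (auto intro: lpos mult_nonneg_nonneg)
  have dy: "dg n l *\<^sub>v y = 0\<^sub>v n"
    unfolding dg_mult_vec[OF yc] using z by (intro eq_vecI) auto
  have "B *\<^sub>v u = (U * dg n l) *\<^sub>v (adj U *\<^sub>v u)"
    unfolding U(5) by (rule assoc_mult_mat_vec[OF mult_carrier_mat[OF U(1) dg_carrier] aU u])
  also have "\<dots> = U *\<^sub>v (dg n l *\<^sub>v y)"
    unfolding y_def by (rule assoc_mult_mat_vec[OF U(1) dg_carrier yc[unfolded y_def]])
  also have "\<dots> = 0\<^sub>v n" unfolding dy using U(1) by simp
  finally show ?thesis .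
qed



lemma sq_diff_identity: fixes B C :: "complex mat" assumes B: "B \<in> carrier_mat n n" and C: "C \<in> carrier_mat n n"
  and BC: "B * B = C * C"
  shows "B * (B - C) + (B - C) * C = 0\<^sub>m n n"
proof (rule eq_matI)
  fix i j assume ij: "i < dim_row (0\<^sub>m n n)" "j < dim_col (0\<^sub>m n n)"
  have "(B * B) $$ (i,j) = (C * C) $$ (i,j)" using BC by simp
  hence e: "(\<Sum>k\<in>{0..<n}. B $$ (i,k) * B $$ (k,j)) = (\<Sum>k\<in>{0..<n}. C $$ (i,k) * C $$ (k,j))"
    using ij B C by (simp add: scalar_prod_def)
  have "(B * (B - C) + (B - C) * C) $$ (i,j)
      = (\<Sum>k\<in>{0..<n}. B $$ (i,k) * (B $$ (k,j) - C $$ (k,j))) + (\<Sum>k\<in>{0..<n}. (B $$ (i,k) - C $$ (i,k)) * C $$ (k,j))"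
    using ij B C by (simp add: scalar_prod_def)
  also have "\<dots> = (\<Sum>k\<in>{0..<n}. B $$ (i,k) * B $$ (k,j)) - (\<Sum>k\<in>{0..<n}. C $$ (i,k) * C $$ (k,j))"
    by (simp only: right_diff_distrib left_diff_distrib sum_subtractf) simp
  also have "\<dots> = 0" using e by simp
  finally show "(B * (B - C) + (B - C) * C) $$ (i,j) = 0\<^sub>m n n $$ (i,j)" using ij by simp
qed (use B C in auto)

lemma psd_sqrt_unique: assumes PB: "psd n B" and PC: "psd n C" and BC: "B * B = C * C"
  shows "B = C"
proof (rule ccontr)
  assume neq: "B \<noteq> C"
  have B: "B \<in> carrier_mat n n" and C: "C \<in> carrier_mat n n" using PB PC by (auto simp: psd_def)
  have hB: "adj B = B" and hC: "adj C = C" using psd_herm[OF PB] psd_herm[OF PC] by (auto simp: herm_def)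
  define D where "D = B - C"
  have DC: "D \<in> carrier_mat n n" using B C by (simp add: D_def minus_carrier_mat)
  have hD: "herm n D" using hB hC B C DC by (simp add: herm_def D_def adj_minus[of _ n n])
  obtain W m where W: "W \<in> carrier_mat n n" "adj W * W = 1\<^sub>m n" "W * adj W = 1\<^sub>m n"
    "D * W = W * dg n m" "D = W * dg n m * adj W"
    using spectral[OF hD] by blast
  have aW: "adj W \<in> carrier_mat n n" using W(1) by simp
  have "\<exists>j<n. m j \<noteq> 0"
  proof (rule ccontr)
    assume "\<not> ?thesis"
    hence "dg n m = 0\<^sub>m n n" by (intro eq_matI) (auto simp: dg_def)
    hence "D = 0\<^sub>m n n" using W(5) W(1) aW by simp
    have "B = C"
    proof (rule eq_matI)
      fix i k assume ik: "i < dim_row C" "k < dim_col C"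
      have "D $$ (i,k) = 0" using \<open>D = 0\<^sub>m n n\<close> ik C by simp
      moreover have "D $$ (i,k) = B $$ (i,k) - C $$ (i,k)"
        unfolding D_def by (rule index_minus_mat) (use C ik in auto)
      ultimately show "B $$ (i,k) = C $$ (i,k)" by simp
    qed (use B C in auto)
    thus False using neq by simp
  qed
  then obtain j where j: "j < n" "m j \<noteq> 0" by blast
  define e where "e = (unit_vec n j :: complex vec)"
  have ec: "e \<in> carrier_vec n" by (simp add: e_def)
  define u where "u = W *\<^sub>v e"
  have uc: "u \<in> carrier_vec n" unfolding u_def by (rule mult_mat_vec_carrier[OF W(1) ec])
  have de: "dg n m *\<^sub>v e = complex_of_real (m j) \<cdot>\<^sub>v e"
    unfolding dg_mult_vec[OF ec] by (intro eq_vecI) (auto simp: e_def unit_vec_def)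
  have Du: "D *\<^sub>v u = complex_of_real (m j) \<cdot>\<^sub>v u"
  proof -
    have "D *\<^sub>v u = (D * W) *\<^sub>v e" unfolding u_def by (rule assoc_mult_mat_vec[OF DC W(1) ec, symmetric])
    also have "\<dots> = W *\<^sub>v (dg n m *\<^sub>v e)" unfolding W(4) by (rule assoc_mult_mat_vec[OF W(1) dg_carrier ec])
    also have "\<dots> = complex_of_real (m j) \<cdot>\<^sub>v u" unfolding de u_def by (rule mult_mat_vec[OF W(1) ec])
    finally show ?thesis .
  qed
  have u0: "u \<noteq> 0\<^sub>v n"
  proof
    assume "u = 0\<^sub>v n"
    hence "adj W *\<^sub>v u = 0\<^sub>v n" using aW by simp
    moreover have "adj W *\<^sub>v u = e"
    proof -
      have "adj W *\<^sub>v u = (adj W * W) *\<^sub>v e" unfolding u_def by (rule assoc_mult_mat_vec[OF aW W(1) ec, symmetric])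
      thus ?thesis using W(2) ec by simp
    qed
    ultimately have "e = 0\<^sub>v n" by simp
    hence "e $ j = 0" using j by simp
    thus False using j by (simp add: e_def)
  qed
  have Z: "B * D + D * C = 0\<^sub>m n n" unfolding D_def by (rule sq_diff_identity[OF B C BC])
  have Bu: "B *\<^sub>v u \<in> carrier_vec n" "C *\<^sub>v u \<in> carrier_vec n" using B C uc by auto
  have "(B * D + D * C) *\<^sub>v u = B *\<^sub>v (D *\<^sub>v u) + D *\<^sub>v (C *\<^sub>v u)"
  proof -
    have "(B * D + D * C) *\<^sub>v u = (B * D) *\<^sub>v u + (D * C) *\<^sub>v u"
      by (rule add_mult_distrib_mat_vec[OF mult_carrier_mat[OF B DC] mult_carrier_mat[OF DC C] uc])
    thus ?thesis using assoc_mult_mat_vec[OF B DC uc] assoc_mult_mat_vec[OF DC C uc] by simp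
  qed
  hence "B *\<^sub>v (D *\<^sub>v u) + D *\<^sub>v (C *\<^sub>v u) = 0\<^sub>v n" using Z uc by simp
  hence "ip u (B *\<^sub>v (D *\<^sub>v u) + D *\<^sub>v (C *\<^sub>v u)) = 0" using uc by (simp add: ip_def)
  moreover have "ip u (B *\<^sub>v (D *\<^sub>v u) + D *\<^sub>v (C *\<^sub>v u)) = ip u (B *\<^sub>v (D *\<^sub>v u)) + ip u (D *\<^sub>v (C *\<^sub>v u))"
    by (rule ip_add_right) (use B DC C uc in auto)
  moreover have "ip u (B *\<^sub>v (D *\<^sub>v u)) = complex_of_real (m j) * qf B u"
  proof -
    have "B *\<^sub>v (D *\<^sub>v u) = complex_of_real (m j) \<cdot>\<^sub>v (B *\<^sub>v u)" unfolding Du by (rule mult_mat_vec[OF B uc])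
    thus ?thesis using qf_ip[OF uc, of B] ip_smult_right[of "B *\<^sub>v u" u] B uc by simp
  qed
  moreover have "ip u (D *\<^sub>v (C *\<^sub>v u)) = complex_of_real (m j) * qf C u"
  proof -
    have "ip u (D *\<^sub>v (C *\<^sub>v u)) = ip (adj D *\<^sub>v u) (C *\<^sub>v u)" by (rule ip_adj[OF DC Bu(2) uc])
    also have "adj D = D" using hD by (simp add: herm_def)
    finally show ?thesis unfolding Du ip_smult_left using qf_ip[OF uc, of C] by simp
  qed
  ultimately have "complex_of_real (m j) * (qf B u + qf C u) = 0" by (simp add: algebra_simps)
  hence s: "qf B u + qf C u = 0" using j by simp
  have rB: "Im (qf B u) = 0" "Re (qf B u) \<ge> 0" and rC: "Im (qf C u) = 0" "Re (qf C u) \<ge> 0"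
    using PB PC uc by (auto simp: psd_qf)
  have "Re (qf B u) + Re (qf C u) = 0" using s by (metis plus_complex.simps(1) zero_complex.simps(1))
  hence "qf B u = 0" "qf C u = 0" using rB rC by (auto simp: complex_eq_iff)
  hence "B *\<^sub>v u = 0\<^sub>v n" "C *\<^sub>v u = 0\<^sub>v n" using psd_kernel[OF PB uc] psd_kernel[OF PC uc] by auto
  hence "D *\<^sub>v u = 0\<^sub>v n" unfolding D_def using B C uc by (simp add: minus_mult_distrib_mat_vec)
  hence "complex_of_real (m j) \<cdot>\<^sub>v u = 0\<^sub>v n" using Du by simp
  hence "\<And>i. i < n \<Longrightarrow> complex_of_real (m j) * u $ i = 0" using uc
    by (metis carrier_vecD index_smult_vec(1) index_zero_vec(1))
  hence "u = 0\<^sub>v n" using j uc by (intro eq_vecI) auto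
  thus False using u0 by simp
qed

lemma mat_sqrt_eq: assumes "psd n B" "B * B = P" shows "mat_sqrt n P = B"
  unfolding mat_sqrt_def using assms psd_sqrt_unique by (intro the_equality) auto



lemma dg_mult: "dg n a * dg n b = dg n (\<lambda>j. a j * b j)"
proof (rule eq_matI)
  fix i j assume ij: "i < dim_row (dg n (\<lambda>j. a j * b j))" "j < dim_col (dg n (\<lambda>j. a j * b j))"
  have "(dg n a * dg n b) $$ (i,j) = (\<Sum>t\<in>{0..<n}. (if i = t then complex_of_real (a i) else 0) * (if t = j then complex_of_real (b t) else 0))"
    using ij by (simp add: scalar_prod_def dg_def cong: if_cong)
  also have "\<dots> = (\<Sum>t\<in>{0..<n}. if i = t then (if i = j then complex_of_real (a i * b i) else 0) else 0)"
    by (rule sum.cong) auto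
  also have "\<dots> = dg n (\<lambda>j. a j * b j) $$ (i,j)" using ij by (simp add: dg_def)
  finally show "(dg n a * dg n b) $$ (i,j) = dg n (\<lambda>j. a j * b j) $$ (i,j)" .
qed auto

lemma smult_dg: "complex_of_real c \<cdot>\<^sub>m dg n a = dg n (\<lambda>j. c * a j)"
  by (rule eq_matI) (auto simp: dg_def)

lemma spec_sq: assumes W: "W \<in> carrier_mat n n" and WW: "adj W * W = 1\<^sub>m n"
  shows "(W * dg n a * adj W) * (W * dg n b * adj W) = W * dg n (\<lambda>j. a j * b j) * adj W"
proof -
  have aW: "adj W \<in> carrier_mat n n" using W by simp
  have c1: "adj W * (W * X) = X" if X: "X \<in> carrier_mat n n" for X
  proof -
    have "adj W * (W * X) = (adj W * W) * X" by (rule assoc_mult_mat[OF aW W X, symmetric])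
    thus ?thesis using WW X by simp
  qed
  have c2: "dg n a * (dg n b * X) = dg n (\<lambda>j. a j * b j) * X" if X: "X \<in> carrier_mat n n" for X
  proof -
    have "dg n a * (dg n b * X) = (dg n a * dg n b) * X" by (rule assoc_mult_mat[OF dg_carrier dg_carrier X, symmetric])
    thus ?thesis by (simp add: dg_mult)
  qed
  have Wa: "W * dg n a \<in> carrier_mat n n" by (rule mult_carrier_mat[OF W dg_carrier])
  have Wb: "W * dg n b \<in> carrier_mat n n" by (rule mult_carrier_mat[OF W dg_carrier])
  have bW: "dg n b * adj W \<in> carrier_mat n n" by (rule mult_carrier_mat[OF dg_carrier aW])
  have Y: "W * dg n b * adj W \<in> carrier_mat n n" by (rule mult_carrier_mat[OF Wb aW])
  have e1: "(W * dg n a * adj W) * (W * dg n b * adj W) = (W * dg n a) * (adj W * (W * dg n b * adj W))"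
    by (rule assoc_mult_mat[OF Wa aW Y])
  have e2: "W * dg n b * adj W = W * (dg n b * adj W)" by (rule assoc_mult_mat[OF W dg_carrier aW])
  have e3: "adj W * (W * (dg n b * adj W)) = dg n b * adj W" by (rule c1[OF bW])
  have e4: "(W * dg n a) * (dg n b * adj W) = W * (dg n a * (dg n b * adj W))"
    by (rule assoc_mult_mat[OF W dg_carrier bW])
  have e5: "dg n a * (dg n b * adj W) = dg n (\<lambda>j. a j * b j) * adj W" by (rule c2[OF aW])
  have e6: "W * (dg n (\<lambda>j. a j * b j) * adj W) = W * dg n (\<lambda>j. a j * b j) * adj W"
    by (rule assoc_mult_mat[OF W dg_carrier aW, symmetric])
  show ?thesis unfolding e1 e2[symmetric] unfolding e2 e3 e4 e5 e6 ..
qed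

lemma ip_unit: assumes x: "x \<in> carrier_vec n" and j: "j < n" shows "ip (unit_vec n j) x = x $ j"
proof -
  have "ip (unit_vec n j) x = (\<Sum>i<n. if j = i then x $ i else 0)"
    unfolding ip_def by (rule sum.cong) (auto simp: unit_vec_def)
  thus ?thesis using j by simp
qed

lemma qf_unit_conj: assumes A: "A \<in> carrier_mat n n" and W: "W \<in> carrier_mat n n" and j: "j < n"
  shows "qf A (W *\<^sub>v unit_vec n j) = (adj W * A * W) $$ (j,j)"
proof -
  define e where "e = (unit_vec n j :: complex vec)"
  have ec: "e \<in> carrier_vec n" by (simp add: e_def)
  have aW: "adj W \<in> carrier_mat n n" using W by simp
  have We: "W *\<^sub>v e \<in> carrier_vec n" using W ec by simp
  have AWe: "A *\<^sub>v (W *\<^sub>v e) \<in> carrier_vec n" using A We by simp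
  have "qf A (W *\<^sub>v e) = ip (W *\<^sub>v e) (A *\<^sub>v (W *\<^sub>v e))" by (rule qf_ip[OF We])
  also have "\<dots> = ip (adj (adj W) *\<^sub>v e) (A *\<^sub>v (W *\<^sub>v e))" by simp
  also have "\<dots> = ip e (adj W *\<^sub>v (A *\<^sub>v (W *\<^sub>v e)))" by (rule ip_adj[OF aW AWe ec, symmetric])
  also have "adj W *\<^sub>v (A *\<^sub>v (W *\<^sub>v e)) = (adj W * A * W) *\<^sub>v e"
    using assoc_mult_mat_vec[OF mult_carrier_mat[OF aW A] W ec] assoc_mult_mat_vec[OF aW A We] by simp
  also have "ip e ((adj W * A * W) *\<^sub>v e) = ((adj W * A * W) *\<^sub>v e) $ j"
    unfolding e_def by (rule ip_unit[OF mult_mat_vec_carrier[OF mult_carrier_mat[OF mult_carrier_mat[OF aW A] W] unit_vec_carrier] j])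
  also have "\<dots> = (adj W * A * W) $$ (j,j)" using aW A W j by (simp add: e_def)
  finally show ?thesis unfolding e_def .
qed

lemma trace_conj: assumes A: "A \<in> carrier_mat n n" and W: "W \<in> carrier_mat n n" and WW: "W * adj W = 1\<^sub>m n"
  shows "mtrace (adj W * A * W) = mtrace A"
proof -
  have aW: "adj W \<in> carrier_mat n n" using W by simp
  have "mtrace ((adj W * A) * W) = mtrace (W * (adj W * A))"
    by (rule mtrace_comm[OF mult_carrier_mat[OF aW A] W])
  also have "W * (adj W * A) = (W * adj W) * A" by (rule assoc_mult_mat[OF W aW A, symmetric])
  also have "\<dots> = A" using WW A by simp
  finally show ?thesis .
qed

lemma mtrace_dg: "mtrace (dg n a) = complex_of_real (\<Sum>j<n. a j)"
  by (simp add: mtrace_def dg_def)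

lemma qf_minus: assumes A: "A \<in> carrier_mat n n" and B: "B \<in> carrier_mat n n" and u: "u \<in> carrier_vec n"
  shows "qf (A - B) u = qf A u - qf B u"
proof -
  have "(A - B) *\<^sub>v u = A *\<^sub>v u - B *\<^sub>v u" by (rule minus_mult_distrib_mat_vec[OF A B u])
  thus ?thesis using A B u by (simp add: qf_def right_diff_distrib sum_subtractf)
qed



lemma smult_spec: assumes W: "W \<in> carrier_mat n n"
  shows "complex_of_real c \<cdot>\<^sub>m (W * dg n l * adj W) = W * dg n (\<lambda>j. c * l j) * adj W"
proof -
  have aW: "adj W \<in> carrier_mat n n" using W by simp
  have "complex_of_real c \<cdot>\<^sub>m (W * dg n l * adj W) = (complex_of_real c \<cdot>\<^sub>m (W * dg n l)) * adj W"
    by (rule mult_smult_assoc_mat[OF mult_carrier_mat[OF W dg_carrier] aW, symmetric])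
  also have "complex_of_real c \<cdot>\<^sub>m (W * dg n l) = W * (complex_of_real c \<cdot>\<^sub>m dg n l)"
    by (rule mult_smult_distrib[OF W dg_carrier, symmetric])
  finally show ?thesis by (simp add: smult_dg)
qed

lemma adj_spec: assumes W: "W \<in> carrier_mat n n"
  shows "adj (W * dg n l * adj W) = W * dg n l * adj W"
proof -
  have aW: "adj W \<in> carrier_mat n n" using W by simp
  have "adj (W * dg n l * adj W) = adj (adj W) * adj (W * dg n l)"
    by (rule adj_mult[OF mult_carrier_mat[OF W dg_carrier] aW])
  also have "adj (W * dg n l) = dg n l * adj W" using adj_mult[OF W dg_carrier] by simp
  finally show ?thesis using assoc_mult_mat[OF W dg_carrier aW] by simp
qed

lemma psd_spec: assumes W: "W \<in> carrier_mat n n" and WW: "adj W * W = 1\<^sub>m n" and WW2: "W * adj W = 1\<^sub>m n"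
  and l: "\<And>j. l j \<ge> 0"
  shows "psd n (W * dg n l * adj W)"
  unfolding psd_qf
proof (intro conjI ballI)
  have aW: "adj W \<in> carrier_mat n n" using W by simp
  show "W * dg n l * adj W \<in> carrier_mat n n" by (rule mult_carrier_mat[OF mult_carrier_mat[OF W dg_carrier] aW])
  fix v :: "complex vec" assume v: "v \<in> carrier_vec n"
  define y where "y = adj W *\<^sub>v v"
  have yc: "y \<in> carrier_vec n" unfolding y_def by (rule mult_mat_vec_carrier[OF aW v])
  have "W *\<^sub>v y = (W * adj W) *\<^sub>v v" unfolding y_def by (rule assoc_mult_mat_vec[OF W aW v, symmetric])
  hence Wy: "W *\<^sub>v y = v" using WW2 v by simp
  have q: "qf (W * dg n l * adj W) v = complex_of_real (\<Sum>j<n. l j * (cmod (y $ j))\<^sup>2)"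
    using qf_spec[OF W WW refl yc] Wy by simp
  show "Im (qf (W * dg n l * adj W) v) = 0" unfolding q by simp
  show "Re (qf (W * dg n l * adj W) v) \<ge> 0" unfolding q using l by (simp add: sum_nonneg)
qed

lemma trace_norm_bound:
  assumes R: "density n \<rho>" and S: "density n \<sigma>"
  shows "trace_norm (complex_of_real c \<cdot>\<^sub>m (\<rho> - \<sigma>)) \<le> 2 * \<bar>c\<bar>"
proof -
  have PR: "psd n \<rho>" and PS: "psd n \<sigma>" and tR: "mtrace \<rho> = 1" and tS: "mtrace \<sigma> = 1"
    using R S by (auto simp: density_def)
  have RC: "\<rho> \<in> carrier_mat n n" and SC: "\<sigma> \<in> carrier_mat n n" using PR PS by (auto simp: psd_def)
  have hR: "adj \<rho> = \<rho>" and hS: "adj \<sigma> = \<sigma>" using psd_herm[OF PR] psd_herm[OF PS] by (auto simp: herm_def)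
  define D where "D = \<rho> - \<sigma>"
  have DC: "D \<in> carrier_mat n n" using SC by (simp add: D_def minus_carrier_mat)
  have hD: "herm n D" using hR hS RC SC DC by (simp add: herm_def D_def adj_minus[of _ n n])
  obtain W l where W: "W \<in> carrier_mat n n" "adj W * W = 1\<^sub>m n" "W * adj W = 1\<^sub>m n"
    "D * W = W * dg n l" "D = W * dg n l * adj W"
    using spectral[OF hD] by blast
  have aW: "adj W \<in> carrier_mat n n" using W(1) by simp
  define M where "M = complex_of_real c \<cdot>\<^sub>m D"
  have M: "M = W * dg n (\<lambda>j. c * l j) * adj W" unfolding M_def W(5) by (rule smult_spec[OF W(1)])
  have dimM: "dim_col M = n" using W(1) by (simp add: M)
  have MM: "adj M * M = W * dg n (\<lambda>j. (c * l j) * (c * l j)) * adj W"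
    unfolding M adj_spec[OF W(1)] by (rule spec_sq[OF W(1) W(2)])
  define B where "B = W * dg n (\<lambda>j. \<bar>c * l j\<bar>) * adj W"
  have BB: "B * B = adj M * M" unfolding B_def MM spec_sq[OF W(1) W(2)]
    by (simp add: abs_mult_self_eq)
  have PB: "psd n B" unfolding B_def by (rule psd_spec[OF W(1) W(2) W(3)]) simp
  have sq: "mat_sqrt n (adj M * M) = B" by (rule mat_sqrt_eq[OF PB BB])
  have tB: "mtrace B = complex_of_real (\<Sum>j<n. \<bar>c * l j\<bar>)"
  proof -
    have "mtrace B = mtrace (adj W * (W * dg n (\<lambda>j. \<bar>c * l j\<bar>)))"
      unfolding B_def by (rule mtrace_comm[OF mult_carrier_mat[OF W(1) dg_carrier] aW])
    also have "adj W * (W * dg n (\<lambda>j. \<bar>c * l j\<bar>)) = (adj W * W) * dg n (\<lambda>j. \<bar>c * l j\<bar>)"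
      by (rule assoc_mult_mat[OF aW W(1) dg_carrier, symmetric])
    finally show ?thesis using W(2) by (simp add: mtrace_dg)
  qed
  have tn: "trace_norm M = (\<Sum>j<n. \<bar>c * l j\<bar>)"
    unfolding trace_norm_def dimM sq tB by simp
  define u where "u j = W *\<^sub>v (unit_vec n j :: complex vec)" for j
  have uc: "u j \<in> carrier_vec n" for j unfolding u_def by (rule mult_mat_vec_carrier[OF W(1) unit_vec_carrier])
  have lq: "complex_of_real (l j) = qf \<rho> (u j) - qf \<sigma> (u j)" if j: "j < n" for j
  proof -
    have "qf D (u j) = complex_of_real (l j)"
      unfolding u_def qf_spec[OF W(1) W(2) W(5) unit_vec_carrier] unit_vec_cmod[OF j] ..
    moreover have "qf D (u j) = qf \<rho> (u j) - qf \<sigma> (u j)" unfolding D_def by (rule qf_minus[OF RC SC uc])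
    ultimately show ?thesis by simp
  qed
  have pR: "Im (qf \<rho> (u j)) = 0" "Re (qf \<rho> (u j)) \<ge> 0" and pS: "Im (qf \<sigma> (u j)) = 0" "Re (qf \<sigma> (u j)) \<ge> 0" for j
    using PR PS uc by (auto simp: psd_qf)
  have labs: "\<bar>l j\<bar> \<le> Re (qf \<rho> (u j)) + Re (qf \<sigma> (u j))" if j: "j < n" for j
  proof -
    have "l j = Re (qf \<rho> (u j)) - Re (qf \<sigma> (u j))" using arg_cong[OF lq[OF j], of Re] by simp
    thus ?thesis using pR(2)[of j] pS(2)[of j] by linarith
  qed
  have sumR: "(\<Sum>j<n. Re (qf A (u j))) = Re (mtrace A)" if A: "A \<in> carrier_mat n n" for A
  proof -
    have "(\<Sum>j<n. qf A (u j)) = (\<Sum>j<n. (adj W * A * W) $$ (j,j))"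
      unfolding u_def by (rule sum.cong[OF refl]) (use qf_unit_conj[OF A W(1)] in auto)
    also have "\<dots> = mtrace (adj W * A * W)" using aW A W(1) by (simp add: mtrace_def)
    also have "\<dots> = mtrace A" by (rule trace_conj[OF A W(1) W(3)])
    finally show ?thesis by (metis Re_sum)
  qed
  have "(\<Sum>j<n. \<bar>l j\<bar>) \<le> (\<Sum>j<n. Re (qf \<rho> (u j)) + Re (qf \<sigma> (u j)))"
    by (rule sum_mono) (use labs in auto)
  also have "\<dots> = 2" unfolding sum.distrib sumR[OF RC] sumR[OF SC] tR tS by simp
  finally have "(\<Sum>j<n. \<bar>l j\<bar>) \<le> 2" .
  hence "\<bar>c\<bar> * (\<Sum>j<n. \<bar>l j\<bar>) \<le> \<bar>c\<bar> * 2" by (simp add: mult_left_mono)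
  moreover have "(\<Sum>j<n. \<bar>c * l j\<bar>) = \<bar>c\<bar> * (\<Sum>j<n. \<bar>l j\<bar>)" by (simp add: abs_mult sum_distrib_left)
  ultimately show ?thesis using tn unfolding M_def D_def by linarith
qed



definition zz :: "nat \<Rightarrow> nat \<Rightarrow> complex" where
  "zz d i = cis (2 * pi * real i / real d)"

lemma zz_norm[simp]: "cnj (zz d i) * zz d i = 1" "zz d i * cnj (zz d i) = 1"
  by (simp_all add: zz_def cis_cnj cis_mult)

lemma zz_sum: assumes d: "d \<ge> 2" shows "(\<Sum>k<d. zz d k) = 0" "(\<Sum>k<d. cnj (zz d k)) = 0"
proof -
  define w where "w = cis (2 * pi / real d)"
  have zw: "zz d k = w ^ k" for k unfolding zz_def w_def DeMoivre by (simp add: field_simps)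
  have w1: "w \<noteq> 1"
  proof
    assume w: "w = 1"
    have "Im w = Im 1" "Re w = Re 1" using w by auto
    hence "sin (2 * pi / real d) = 0" "cos (2 * pi / real d) = 1" by (auto simp: w_def)
    moreover have "0 < 2 * pi / real d" using d by simp
    moreover have "2 * pi / real d \<le> pi" using d by (simp add: field_simps)
    ultimately show False
      using sin_gt_zero[of "2 * pi / real d"] cos_pi
      by (cases "2 * pi / real d = pi") auto
  qed
  have wd: "w ^ d = 1" unfolding w_def DeMoivre using d by simp
  have "(\<Sum>k<d. zz d k) = (\<Sum>k<d. w ^ k)" by (simp add: zw)
  also have "\<dots> = 0" using geometric_sum[OF w1, of d] wd by simp
  finally show s: "(\<Sum>k<d. zz d k) = 0" .
  have "(\<Sum>k<d. cnj (zz d k)) = cnj (\<Sum>k<d. zz d k)" by simp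
  thus "(\<Sum>k<d. cnj (zz d k)) = 0" using s by simp
qed

definition Phi :: "nat \<Rightarrow> (nat \<Rightarrow> complex) \<Rightarrow> complex mat \<Rightarrow> complex mat" where
  "Phi n u \<rho> = mat n n (\<lambda>(i,j). u i * \<rho> $$ (i,j) * cnj (u j))"

lemma Phi_density: assumes R: "density n \<rho>" and u: "\<And>i. cnj (u i) * u i = 1"
  shows "density n (Phi n u \<rho>)"
proof -
  have P: "psd n \<rho>" and t: "mtrace \<rho> = 1" using R by (auto simp: density_def)
  have C: "\<rho> \<in> carrier_mat n n" using P by (simp add: psd_def)
  have PC: "Phi n u \<rho> \<in> carrier_mat n n" by (simp add: Phi_def)
  have u': "u i * cnj (u i) = 1" for i by (metis mult.commute u)
  have "psd n (Phi n u \<rho>)" unfolding psd_qf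
  proof (intro conjI ballI PC)
    fix v :: "complex vec" assume v: "v \<in> carrier_vec n"
    define w where "w = vec n (\<lambda>j. cnj (u j) * v $ j)"
    have wc: "w \<in> carrier_vec n" by (simp add: w_def)
    have "qf (Phi n u \<rho>) v = qf \<rho> w"
      unfolding qf_sum[OF PC v] qf_sum[OF C wc]
      by (intro sum.cong refl) (simp add: Phi_def w_def mult.commute mult.left_commute)
    thus "Im (qf (Phi n u \<rho>) v) = 0" "Re (qf (Phi n u \<rho>) v) \<ge> 0" using P wc by (auto simp: psd_qf)
  qed
  moreover have "mtrace (Phi n u \<rho>) = mtrace \<rho>" using C
    unfolding mtrace_def Phi_def
    by (intro sum.cong) (auto simp: mult.commute mult.left_commute u u')
  ultimately show ?thesis using t by (simp add: density_def)
qed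

lemma Zop_index: "i < d \<Longrightarrow> j < d \<Longrightarrow> Zop d $$ (i,j) = (if i = j then zz d i else 0)"
  by (simp add: Zop_def zz_def)

lemma Zconj: assumes M: "M \<in> carrier_mat d d"
  shows "Zop d * M * adj (Zop d) = Phi d (zz d) M"
proof (rule eq_matI)
  fix i j assume ij: "i < dim_row (Phi d (zz d) M)" "j < dim_col (Phi d (zz d) M)"
  hence i: "i < d" and j: "j < d" by (auto simp: Phi_def)
  have ZC: "Zop d \<in> carrier_mat d d" by (simp add: Zop_def)
  have ZM: "(Zop d * M) $$ (i,k) = zz d i * M $$ (i,k)" if k: "k < d" for k
  proof -
    have "(Zop d * M) $$ (i,k) = (\<Sum>t\<in>{0..<d}. Zop d $$ (i,t) * M $$ (t,k))"
      using i k ZC M by (simp add: scalar_prod_def)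
    also have "\<dots> = (\<Sum>t\<in>{0..<d}. if i = t then zz d i * M $$ (t,k) else 0)"
      by (rule sum.cong) (auto simp: Zop_index i)
    finally show ?thesis using i by simp
  qed
  have "(Zop d * M * adj (Zop d)) $$ (i,j) = (\<Sum>k\<in>{0..<d}. (Zop d * M) $$ (i,k) * cnj (Zop d $$ (j,k)))"
    using i j ZC M by (simp add: scalar_prod_def)
  also have "\<dots> = (\<Sum>k\<in>{0..<d}. if j = k then zz d i * M $$ (i,k) * cnj (zz d j) else 0)"
    by (rule sum.cong) (auto simp: Zop_index j ZM)
  also have "\<dots> = Phi d (zz d) M $$ (i,j)" using i j by (simp add: Phi_def)
  finally show "(Zop d * M * adj (Zop d)) $$ (i,j) = Phi d (zz d) M $$ (i,j)" .
qed (auto simp: Phi_def Zop_def)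

lemma deph_index: assumes M: "M \<in> carrier_mat d d" and a: "a < d" and b: "b < d"
  shows "dephasing d r M $$ (a,b) = complex_of_real r * M $$ (a,b) + complex_of_real (1 - r) * (zz d a * M $$ (a,b) * cnj (zz d b))"
proof -
  have "Zop d * M * adj (Zop d) = Phi d (zz d) M" by (rule Zconj[OF M])
  thus ?thesis using M a b unfolding dephasing_def by (simp add: Phi_def)
qed



lemma deph_carrier[simp]: "dephasing d r M \<in> carrier_mat d d" if "M \<in> carrier_mat d d"
proof -
  have Z: "Zop d \<in> carrier_mat d d" by (simp add: Zop_def)
  show ?thesis unfolding dephasing_def
    by (rule add_carrier_mat[OF smult_carrier_mat[OF mult_carrier_mat[OF mult_carrier_mat[OF Z that] adj_carrier[OF Z]]]])
qed

lemma deph_dim[simp]: "M \<in> carrier_mat d d \<Longrightarrow> dim_row (dephasing d r M) = d"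
  "M \<in> carrier_mat d d \<Longrightarrow> dim_col (dephasing d r M) = d"
  by (metis carrier_matD deph_carrier)+

lemma tensor_dim[simp]: "dim_row (tensor_id N d d' \<rho>) = d * d'" "dim_col (tensor_id N d d' \<rho>) = d * d'"
  by (simp_all add: tensor_id_def)

lemma single_diff: assumes R: "\<rho> \<in> carrier_mat d d"
  shows "dephasing d r1 \<rho> - dephasing d r2 \<rho> = complex_of_real (r1 - r2) \<cdot>\<^sub>m (\<rho> - Phi d (zz d) \<rho>)"
proof (rule eq_matI)
  fix i j assume ij: "i < dim_row (complex_of_real (r1 - r2) \<cdot>\<^sub>m (\<rho> - Phi d (zz d) \<rho>))"
    "j < dim_col (complex_of_real (r1 - r2) \<cdot>\<^sub>m (\<rho> - Phi d (zz d) \<rho>))"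
  hence i: "i < d" and j: "j < d" using R by (auto simp: Phi_def)
  have "(dephasing d r1 \<rho> - dephasing d r2 \<rho>) $$ (i,j) = dephasing d r1 \<rho> $$ (i,j) - dephasing d r2 \<rho> $$ (i,j)"
    by (rule index_minus_mat) (use R i j deph_carrier[OF R] in auto)
  also have "\<dots> = complex_of_real (r1 - r2) * (\<rho> $$ (i,j) - zz d i * \<rho> $$ (i,j) * cnj (zz d j))"
    unfolding deph_index[OF R i j] by (simp add: algebra_simps)
  finally show "(dephasing d r1 \<rho> - dephasing d r2 \<rho>) $$ (i,j) = (complex_of_real (r1 - r2) \<cdot>\<^sub>m (\<rho> - Phi d (zz d) \<rho>)) $$ (i,j)"
    using i j R by (simp add: Phi_def)
qed (use R deph_carrier[OF R] in \<open>auto simp: Phi_def\<close>)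

lemma tensor_carrier[simp]: "tensor_id N d d' \<rho> \<in> carrier_mat (d * d') (d * d')"
  by (simp add: tensor_id_def)

lemma tensor_diff: assumes R: "\<rho> \<in> carrier_mat (d * d') (d * d')"
  shows "tensor_id (dephasing d r1) d d' \<rho> - tensor_id (dephasing d r2) d d' \<rho>
    = complex_of_real (r1 - r2) \<cdot>\<^sub>m (\<rho> - Phi (d * d') (\<lambda>i. zz d (i div d')) \<rho>)"
proof (rule eq_matI)
  fix i j assume ij: "i < dim_row (complex_of_real (r1 - r2) \<cdot>\<^sub>m (\<rho> - Phi (d * d') (\<lambda>i. zz d (i div d')) \<rho>))"
    "j < dim_col (complex_of_real (r1 - r2) \<cdot>\<^sub>m (\<rho> - Phi (d * d') (\<lambda>i. zz d (i div d')) \<rho>))"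
  hence i: "i < d * d'" and j: "j < d * d'" using R by (auto simp: Phi_def)
  define Mij where "Mij = mat d d (\<lambda>(a,b). \<rho> $$ (a * d' + i mod d', b * d' + j mod d'))"
  have MC: "Mij \<in> carrier_mat d d" by (simp add: Mij_def)
  have a: "i div d' < d" and b: "j div d' < d" using i j
    by (simp_all add: less_mult_imp_div_less mult.commute)
  have Me: "Mij $$ (i div d', j div d') = \<rho> $$ (i,j)" using a b by (simp add: Mij_def)
  have T: "tensor_id (dephasing d r) d d' \<rho> $$ (i,j) = dephasing d r Mij $$ (i div d', j div d')" for r
    using i j by (simp add: tensor_id_def Mij_def)
  have "(tensor_id (dephasing d r1) d d' \<rho> - tensor_id (dephasing d r2) d d' \<rho>) $$ (i,j)
      = tensor_id (dephasing d r1) d d' \<rho> $$ (i,j) - tensor_id (dephasing d r2) d d' \<rho> $$ (i,j)"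
    by (rule index_minus_mat) (use i j in auto)
  also have "\<dots> = complex_of_real (r1 - r2) * (\<rho> $$ (i,j) - zz d (i div d') * \<rho> $$ (i,j) * cnj (zz d (j div d')))"
    unfolding T deph_index[OF MC a b] Me by (simp add: algebra_simps)
  finally show "(tensor_id (dephasing d r1) d d' \<rho> - tensor_id (dephasing d r2) d d' \<rho>) $$ (i,j)
      = (complex_of_real (r1 - r2) \<cdot>\<^sub>m (\<rho> - Phi (d * d') (\<lambda>i. zz d (i div d')) \<rho>)) $$ (i,j)"
    using i j R by (simp add: Phi_def)
qed (use R in \<open>auto simp: Phi_def\<close>)



definition rho0 :: "nat \<Rightarrow> complex mat" where
  "rho0 d = mat d d (\<lambda>_. complex_of_real (1 / real d))"

lemma double_sum_prod: fixes f g :: "nat \<Rightarrow> complex" shows "(\<Sum>i<n. \<Sum>j<n. f i * g j) = (\<Sum>i<n. f i) * (\<Sum>j<n. g j)"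
  by (rule sum_product[symmetric])

lemma double_sum_prod_k: fixes f g :: "nat \<Rightarrow> complex" shows "(\<Sum>i<n. \<Sum>j<n. k * (f i * g j)) = k * ((\<Sum>i<n. f i) * (\<Sum>j<n. g j))"
proof -
  have "k * ((\<Sum>i<n. f i) * (\<Sum>j<n. g j)) = k * (\<Sum>i<n. \<Sum>j<n. f i * g j)" by (simp only: double_sum_prod)
  also have "\<dots> = (\<Sum>i<n. \<Sum>j<n. k * (f i * g j))" by (simp only: sum_distrib_left)
  finally show ?thesis by simp
qed

lemma rho0_density: assumes d: "d \<ge> 1" shows "density d (rho0 d)"
proof -
  have C: "rho0 d \<in> carrier_mat d d" by (simp add: rho0_def)
  have "psd d (rho0 d)" unfolding psd_qf
  proof (intro conjI ballI C)
    fix v :: "complex vec" assume v: "v \<in> carrier_vec d"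
    have "qf (rho0 d) v = (\<Sum>i<d. \<Sum>j<d. (complex_of_real (1 / real d) * cnj (v $ i)) * v $ j)"
      unfolding qf_sum[OF C v] by (intro sum.cong refl) (simp add: rho0_def)
    also have "\<dots> = (\<Sum>i<d. complex_of_real (1 / real d) * cnj (v $ i)) * (\<Sum>j<d. v $ j)"
      by (rule double_sum_prod)
    also have "\<dots> = complex_of_real (1 / real d) * (cnj (\<Sum>i<d. v $ i) * (\<Sum>j<d. v $ j))"
      by (simp only: sum_distrib_left[symmetric] cnj_sum mult.assoc)
    also have "\<dots> = complex_of_real (1 / real d * (cmod (\<Sum>i<d. v $ i))\<^sup>2)"
      unfolding cnj_mult_self by simp
    finally have q: "qf (rho0 d) v = complex_of_real (1 / real d * (cmod (\<Sum>i<d. v $ i))\<^sup>2)" .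
    show "Im (qf (rho0 d) v) = 0" "Re (qf (rho0 d) v) \<ge> 0" unfolding q by auto
  qed
  moreover have "mtrace (rho0 d) = 1" using d by (simp add: mtrace_def rho0_def)
  ultimately show ?thesis by (simp add: density_def)
qed

lemma sumz: assumes d: "d \<ge> 2"
  shows "(\<Sum>k<d. X + Y * cnj (zz d k) + W * zz d k) = of_nat d * X"
  by (simp add: sum.distrib sum_distrib_left[symmetric] zz_sum[OF d])

lemma alg1: fixes c a q p zi zj :: complex assumes "q * p = 1"
  shows "(c * (a - q * a * zi)) * (c * (a - p * a * zj)) = c * c * a * a * (1 + zi * zj) + (- (c * c * a * a * zi)) * q + (- (c * c * a * a * zj)) * p"
proof -
  have "(c * (a - q * a * zi)) * (c * (a - p * a * zj)) = c * c * a * a * (1 - q * zi - p * zj + (q * p) * zi * zj)"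
    by (simp add: algebra_simps)
  thus ?thesis using assms by (simp add: algebra_simps)
qed

lemma alg2: fixes b c a q p zi zj :: complex assumes "q * p = 1" "b * b = c * c"
  shows "(b * a * (1 + zi * q)) * (b * a * (1 + p * zj)) = c * c * a * a * (1 + zi * zj) + (c * c * a * a * zi) * q + (c * c * a * a * zj) * p"
proof -
  have "(b * a * (1 + zi * q)) * (b * a * (1 + p * zj)) = (b * b) * a * a * (1 + zi * q + p * zj + (q * p) * zi * zj)"
    by (simp add: algebra_simps)
  thus ?thesis using assms by (simp add: algebra_simps)
qed

lemma lower: assumes d: "d \<ge> 2"
  shows "trace_norm (complex_of_real c \<cdot>\<^sub>m (rho0 d - Phi d (zz d) (rho0 d))) = 2 * \<bar>c\<bar>"
proof -
  define a where "a = complex_of_real (1 / real d)"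
  define M where "M = complex_of_real c \<cdot>\<^sub>m (rho0 d - Phi d (zz d) (rho0 d))"
  have MC: "M \<in> carrier_mat d d" by (simp add: M_def rho0_def Phi_def minus_carrier_mat)
  have Me: "M $$ (i,j) = complex_of_real c * (a - zz d i * a * cnj (zz d j))" if "i < d" "j < d" for i j
    using that by (simp add: M_def rho0_def Phi_def a_def)
  have ca: "cnj a = a" by (simp add: a_def)
  define B where "B = mat d d (\<lambda>(i,j). complex_of_real \<bar>c\<bar> * a * (1 + zz d i * cnj (zz d j)))"
  have BC: "B \<in> carrier_mat d d" by (simp add: B_def)
  have cc: "complex_of_real \<bar>c\<bar> * complex_of_real \<bar>c\<bar> = complex_of_real c * complex_of_real c"
    by (metis abs_mult_self_eq of_real_mult)
  have BB: "B * B = adj M * M"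
  proof (rule eq_matI)
    fix i j assume ij: "i < dim_row (adj M * M)" "j < dim_col (adj M * M)"
    hence i: "i < d" and j: "j < d" using MC by auto
    define K where "K = complex_of_real c * complex_of_real c * a * a"
    have "(adj M * M) $$ (i,j) = (\<Sum>k<d. cnj (M $$ (k,i)) * M $$ (k,j))"
      using i j MC by (simp add: scalar_prod_def lessThan_atLeast0)
    also have "\<dots> = (\<Sum>k<d. K * (1 + zz d i * cnj (zz d j)) + (- (K * zz d i)) * cnj (zz d k) + (- (K * cnj (zz d j))) * zz d k)"
    proof (rule sum.cong[OF refl])
      fix k assume k: "k \<in> {..<d}"
      have "cnj (M $$ (k,i)) = complex_of_real c * (a - cnj (zz d k) * a * zz d i)"
        using Me[of k i] k i ca by simp
      thus "cnj (M $$ (k,i)) * M $$ (k,j) = K * (1 + zz d i * cnj (zz d j)) + (- (K * zz d i)) * cnj (zz d k) + (- (K * cnj (zz d j))) * zz d k"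
        using Me[of k j] k j alg1[OF zz_norm(1)] unfolding K_def by simp
    qed
    also have "\<dots> = of_nat d * (K * (1 + zz d i * cnj (zz d j)))" by (rule sumz[OF d])
    finally have L: "(adj M * M) $$ (i,j) = of_nat d * (K * (1 + zz d i * cnj (zz d j)))" .
    have "(B * B) $$ (i,j) = (\<Sum>k<d. B $$ (i,k) * B $$ (k,j))"
      using i j BC by (simp add: scalar_prod_def lessThan_atLeast0)
    also have "\<dots> = (\<Sum>k<d. K * (1 + zz d i * cnj (zz d j)) + (K * zz d i) * cnj (zz d k) + (K * cnj (zz d j)) * zz d k)"
    proof (rule sum.cong[OF refl])
      fix k assume k: "k \<in> {..<d}"
      show "B $$ (i,k) * B $$ (k,j) = K * (1 + zz d i * cnj (zz d j)) + (K * zz d i) * cnj (zz d k) + (K * cnj (zz d j)) * zz d k"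
        using k i j alg2[OF zz_norm(1) cc] unfolding K_def B_def by simp
    qed
    also have "\<dots> = of_nat d * (K * (1 + zz d i * cnj (zz d j)))" by (rule sumz[OF d])
    finally show "(B * B) $$ (i,j) = (adj M * M) $$ (i,j)" using L by simp
  qed (use BC MC in auto)
  have PB: "psd d B" unfolding psd_qf
  proof (intro conjI ballI BC)
    fix v :: "complex vec" assume v: "v \<in> carrier_vec d"
    define S where "S = (\<Sum>j<d. v $ j)"
    define T where "T = (\<Sum>j<d. cnj (zz d j) * v $ j)"
    have "qf B v = (\<Sum>i<d. \<Sum>j<d. complex_of_real \<bar>c\<bar> * a * (cnj (v $ i) * v $ j) + complex_of_real \<bar>c\<bar> * a * ((zz d i * cnj (v $ i)) * (cnj (zz d j) * v $ j)))"
      unfolding qf_sum[OF BC v] by (intro sum.cong refl) (simp add: B_def algebra_simps)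
    also have "\<dots> = complex_of_real \<bar>c\<bar> * a * ((\<Sum>i<d. cnj (v $ i)) * S) + complex_of_real \<bar>c\<bar> * a * ((\<Sum>i<d. zz d i * cnj (v $ i)) * T)"
      unfolding S_def T_def sum.distrib double_sum_prod_k ..
    also have "(\<Sum>i<d. cnj (v $ i)) = cnj S" by (simp add: S_def)
    also have "(\<Sum>i<d. zz d i * cnj (v $ i)) = cnj T" by (simp add: T_def)
    finally have "qf B v = complex_of_real (\<bar>c\<bar> * (1 / real d) * ((cmod S)\<^sup>2 + (cmod T)\<^sup>2))"
      unfolding cnj_mult_self a_def by (simp add: algebra_simps)
    thus "Im (qf B v) = 0" "Re (qf B v) \<ge> 0" by auto
  qed
  have tB: "mtrace B = complex_of_real (2 * \<bar>c\<bar>)"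
  proof -
    have "mtrace B = (\<Sum>i<d. complex_of_real \<bar>c\<bar> * a * 2)"
      unfolding mtrace_def using BC by (intro sum.cong) (auto simp: B_def)
    also have "\<dots> = complex_of_real (2 * \<bar>c\<bar>)" using d by (simp add: a_def)
    finally show ?thesis .
  qed
  have "mat_sqrt d (adj M * M) = B" by (rule mat_sqrt_eq[OF PB BB])
  hence "trace_norm M = Re (mtrace B)" using MC by (simp add: trace_norm_def)
  thus ?thesis using tB unfolding M_def by simp
qed



theorem theorem3:
  fixes d :: nat and r1 r2 :: real
  assumes "d \<ge> 2" and "0 \<le> r1" and "r1 \<le> 1" and "0 \<le> r2" and "r2 \<le> 1"
  shows "Sup {succ_single (dephasing d r1) (dephasing d r2) \<rho> | \<rho>. density d \<rho>}
       = Sup {succ_general (dephasing d r1) (dephasing d r2) d d' \<rho> | d' \<rho>. d' \<ge> 1 \<and> density (d * d') \<rho>}"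
proof -
  have d: "d \<ge> 2" by fact
  define c where "c = r1 - r2"
  define v where "v = 1/2 + 1/4 * (2 * \<bar>c\<bar>)"
  have dens0: "density d (rho0 d)" using d by (intro rho0_density) simp
  have low: "trace_norm (complex_of_real c \<cdot>\<^sub>m (rho0 d - Phi d (zz d) (rho0 d))) = 2 * \<bar>c\<bar>"
    by (rule lower[OF d])
  have C0: "rho0 d \<in> carrier_mat d d" by (simp add: rho0_def)
  have S1: "Sup {succ_single (dephasing d r1) (dephasing d r2) \<rho> | \<rho>. density d \<rho>} = v"
  proof (rule cSup_eq_maximum)
    have "succ_single (dephasing d r1) (dephasing d r2) (rho0 d) = v"
      unfolding succ_single_def single_diff[OF C0, of r1 r2] c_def[symmetric] low v_def ..
    thus "v \<in> {succ_single (dephasing d r1) (dephasing d r2) \<rho> | \<rho>. density d \<rho>}"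
      using dens0 by blast
  next
    fix x assume "x \<in> {succ_single (dephasing d r1) (dephasing d r2) \<rho> | \<rho>. density d \<rho>}"
    then obtain \<rho> where R: "density d \<rho>" and x: "x = succ_single (dephasing d r1) (dephasing d r2) \<rho>" by blast
    have C: "\<rho> \<in> carrier_mat d d" using R by (simp add: density_def psd_def)
    have "density d (Phi d (zz d) \<rho>)" by (rule Phi_density[OF R]) simp
    hence "trace_norm (complex_of_real c \<cdot>\<^sub>m (\<rho> - Phi d (zz d) \<rho>)) \<le> 2 * \<bar>c\<bar>"
      by (rule trace_norm_bound[OF R])
    thus "x \<le> v" unfolding x succ_single_def single_diff[OF C] v_def c_def by simp
  qed
  have S2: "Sup {succ_general (dephasing d r1) (dephasing d r2) d d' \<rho> | d' \<rho>. d' \<ge> 1 \<and> density (d * d') \<rho>} = v"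
  proof (rule cSup_eq_maximum)
    have "tensor_id (dephasing d r1) d 1 (rho0 d) - tensor_id (dephasing d r2) d 1 (rho0 d)
      = complex_of_real c \<cdot>\<^sub>m (rho0 d - Phi d (zz d) (rho0 d))"
      using tensor_diff[of "rho0 d" d 1 r1 r2] C0 by (simp add: c_def)
    hence "succ_general (dephasing d r1) (dephasing d r2) d 1 (rho0 d) = v"
      using low by (simp add: succ_general_def v_def)
    thus "v \<in> {succ_general (dephasing d r1) (dephasing d r2) d d' \<rho> | d' \<rho>. d' \<ge> 1 \<and> density (d * d') \<rho>}"
      using dens0 by (metis (mono_tags, lifting) mem_Collect_eq mult.right_neutral order_refl)
  next
    fix x assume "x \<in> {succ_general (dephasing d r1) (dephasing d r2) d d' \<rho> | d' \<rho>. d' \<ge> 1 \<and> density (d * d') \<rho>}"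
    then obtain d' \<rho> where R: "density (d * d') \<rho>" and x: "x = succ_general (dephasing d r1) (dephasing d r2) d d' \<rho>" by blast
    have C: "\<rho> \<in> carrier_mat (d * d') (d * d')" using R by (simp add: density_def psd_def)
    have "density (d * d') (Phi (d * d') (\<lambda>i. zz d (i div d')) \<rho>)" by (rule Phi_density[OF R]) simp
    hence "trace_norm (complex_of_real c \<cdot>\<^sub>m (\<rho> - Phi (d * d') (\<lambda>i. zz d (i div d')) \<rho>)) \<le> 2 * \<bar>c\<bar>"
      by (rule trace_norm_bound[OF R])
    thus "x \<le> v" unfolding x succ_general_def tensor_diff[OF C] v_def c_def by simp
  qed
  show ?thesis using S1 S2 by simp
qed

end
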